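(* Let $\kappa$ be an uncountable cardinal. The following are equivalent: (i) there is a finitely additive regular probability measure on $\kappa$ (defined on all subsets of $\kappa$) which vanishes on singletons; (ii) there is a regular singular state on $l^\infty(\kappa)$; (iii) there is a regular singular state on $B(l^2(\kappa))$.
   Context: A finitely additive measure is regular if the union of any countable family of null sets is null. A state $\phi$ on a von Neumann algebra is regular if whenever $\{q_n\}$ is a countable set of projections with $\phi(q_n)=0$ for all $n$, then $\phi(\bigvee q_n)=0$. A state on $l^\infty(\kappa)$ is singular if it vanishes on finitely supported functions; a state on $B(l^2(\kappa))$ is singular if it vanishes on the compact operators. *)

theory Defs
  imports "HOL-Analysis.Analysis"
begin

definition cnonneg :: "complex \<Rightarrow> bool" where
  "cnonneg z \<longleftrightarrow> Im z = 0 \<and> Re z \<ge> 0"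

definition fa_prob_measure :: "('a set \<Rightarrow> real) \<Rightarrow> bool" where
  "fa_prob_measure \<mu> \<longleftrightarrow>
     (\<forall>A. \<mu> A \<ge> 0) \<and> \<mu> UNIV = 1 \<and>
     (\<forall>A B. A \<inter> B = {} \<longrightarrow> \<mu> (A \<union> B) = \<mu> A + \<mu> B)"

text \<open>Regular: the union of any countable family of null sets is null.
  (Countable families are indexed by nat; finite families are covered by repetition.)\<close>
definition regular_measure :: "('a set \<Rightarrow> real) \<Rightarrow> bool" where
  "regular_measure \<mu> \<longleftrightarrow>
     (\<forall>A :: nat \<Rightarrow> 'a set. (\<forall>n. \<mu> (A n) = 0) \<longrightarrow> \<mu> (\<Union>n. A n) = 0)"

definition linf :: "('a \<Rightarrow> complex) set" where
  "linf = {f. bounded (range f)}"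

definition linf_state :: "(('a \<Rightarrow> complex) \<Rightarrow> complex) \<Rightarrow> bool" where
  "linf_state \<phi> \<longleftrightarrow>
     (\<forall>f\<in>linf. \<forall>g\<in>linf. \<forall>c. \<phi> (\<lambda>x. f x + c * g x) = \<phi> f + c * \<phi> g) \<and>
     (\<forall>f\<in>linf. (\<forall>x. cnonneg (f x)) \<longrightarrow> cnonneg (\<phi> f)) \<and>
     \<phi> (\<lambda>_. 1) = 1"

definition linf_proj :: "('a \<Rightarrow> complex) \<Rightarrow> bool" where
  "linf_proj p \<longleftrightarrow> p \<in> linf \<and> (\<forall>x. p x * p x = p x \<and> cnj (p x) = p x)"

text \<open>Projection order \<open>p \<le> q\<close> iff \<open>q p = p\<close>; \<open>q\<close> is the supremum of the family \<open>P\<close>.\<close>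
definition linf_proj_sup :: "(nat \<Rightarrow> 'a \<Rightarrow> complex) \<Rightarrow> ('a \<Rightarrow> complex) \<Rightarrow> bool" where
  "linf_proj_sup P q \<longleftrightarrow> linf_proj q \<and> (\<forall>n. (\<lambda>x. q x * P n x) = P n) \<and>
     (\<forall>r. linf_proj r \<and> (\<forall>n. (\<lambda>x. r x * P n x) = P n) \<longrightarrow> (\<lambda>x. r x * q x) = q)"

definition linf_regular :: "(('a \<Rightarrow> complex) \<Rightarrow> complex) \<Rightarrow> bool" where
  "linf_regular \<phi> \<longleftrightarrow>
     (\<forall>P q. (\<forall>n. linf_proj (P n) \<and> \<phi> (P n) = 0) \<and> linf_proj_sup P q \<longrightarrow> \<phi> q = 0)"

definition linf_singular :: "(('a \<Rightarrow> complex) \<Rightarrow> complex) \<Rightarrow> bool" where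
  "linf_singular \<phi> \<longleftrightarrow> (\<forall>f. finite {x. f x \<noteq> 0} \<longrightarrow> \<phi> f = 0)"

definition ell2 :: "('a \<Rightarrow> complex) set" where
  "ell2 = {f. (\<lambda>x. (norm (f x))\<^sup>2) summable_on UNIV}"

definition ell2_inner :: "('a \<Rightarrow> complex) \<Rightarrow> ('a \<Rightarrow> complex) \<Rightarrow> complex" where
  "ell2_inner f g = (\<Sum>\<^sub>\<infinity>x. cnj (f x) * g x)"

definition ell2_norm :: "('a \<Rightarrow> complex) \<Rightarrow> real" where
  "ell2_norm f = sqrt (\<Sum>\<^sub>\<infinity>x. (norm (f x))\<^sup>2)"

definition ell2_metric :: "('a \<Rightarrow> complex) metric" where
  "ell2_metric = metric (ell2, \<lambda>f g. ell2_norm (\<lambda>x. f x - g x))"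

text \<open>Bounded linear operators on l^2, represented as functions that are
  normalised to 0 outside of l^2 (so that operator equality is HOL equality).\<close>
definition bop :: "(('a \<Rightarrow> complex) \<Rightarrow> ('a \<Rightarrow> complex)) set" where
  "bop = {T. (\<forall>f\<in>ell2. T f \<in> ell2) \<and>
             (\<forall>f\<in>ell2. \<forall>g\<in>ell2. \<forall>c. T (\<lambda>x. f x + c * g x) = (\<lambda>x. T f x + c * T g x)) \<and>
             (\<exists>K. \<forall>f\<in>ell2. ell2_norm (T f) \<le> K * ell2_norm f) \<and>
             (\<forall>f. f \<notin> ell2 \<longrightarrow> T f = (\<lambda>_. 0))}"

definition bop_id :: "('a \<Rightarrow> complex) \<Rightarrow> ('a \<Rightarrow> complex)" where
  "bop_id f = (if f \<in> ell2 then f else (\<lambda>_. 0))"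

definition bop_add_scaled ::
  "(('a \<Rightarrow> complex) \<Rightarrow> ('a \<Rightarrow> complex)) \<Rightarrow> complex \<Rightarrow> (('a \<Rightarrow> complex) \<Rightarrow> ('a \<Rightarrow> complex))
     \<Rightarrow> (('a \<Rightarrow> complex) \<Rightarrow> ('a \<Rightarrow> complex))" where
  "bop_add_scaled S c T = (\<lambda>f x. S f x + c * T f x)"

definition bop_positive :: "(('a \<Rightarrow> complex) \<Rightarrow> ('a \<Rightarrow> complex)) \<Rightarrow> bool" where
  "bop_positive T \<longleftrightarrow> T \<in> bop \<and> (\<forall>f\<in>ell2. cnonneg (ell2_inner f (T f)))"

definition bop_state :: "((('a \<Rightarrow> complex) \<Rightarrow> ('a \<Rightarrow> complex)) \<Rightarrow> complex) \<Rightarrow> bool" where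
  "bop_state \<phi> \<longleftrightarrow>
     (\<forall>S\<in>bop. \<forall>T\<in>bop. \<forall>c. \<phi> (bop_add_scaled S c T) = \<phi> S + c * \<phi> T) \<and>
     (\<forall>T. bop_positive T \<longrightarrow> cnonneg (\<phi> T)) \<and>
     \<phi> bop_id = 1"

definition bop_proj :: "(('a \<Rightarrow> complex) \<Rightarrow> ('a \<Rightarrow> complex)) \<Rightarrow> bool" where
  "bop_proj P \<longleftrightarrow> P \<in> bop \<and> P \<circ> P = P \<and>
     (\<forall>f\<in>ell2. \<forall>g\<in>ell2. ell2_inner (P f) g = ell2_inner f (P g))"

definition bop_proj_sup ::
  "(nat \<Rightarrow> ('a \<Rightarrow> complex) \<Rightarrow> ('a \<Rightarrow> complex)) \<Rightarrow> (('a \<Rightarrow> complex) \<Rightarrow> ('a \<Rightarrow> complex)) \<Rightarrow> bool" where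
  "bop_proj_sup P Q \<longleftrightarrow> bop_proj Q \<and> (\<forall>n. Q \<circ> P n = P n) \<and>
     (\<forall>R. bop_proj R \<and> (\<forall>n. R \<circ> P n = P n) \<longrightarrow> R \<circ> Q = Q)"

definition bop_regular :: "((('a \<Rightarrow> complex) \<Rightarrow> ('a \<Rightarrow> complex)) \<Rightarrow> complex) \<Rightarrow> bool" where
  "bop_regular \<phi> \<longleftrightarrow>
     (\<forall>P Q. (\<forall>n. bop_proj (P n) \<and> \<phi> (P n) = 0) \<and> bop_proj_sup P Q \<longrightarrow> \<phi> Q = 0)"

definition bop_compact :: "(('a \<Rightarrow> complex) \<Rightarrow> ('a \<Rightarrow> complex)) \<Rightarrow> bool" where
  "bop_compact T \<longleftrightarrow> T \<in> bop \<and>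
     compactin (mtopology_of ell2_metric)
       ((mtopology_of ell2_metric) closure_of (T ` {f\<in>ell2. ell2_norm f \<le> 1}))"

definition bop_singular :: "((('a \<Rightarrow> complex) \<Rightarrow> ('a \<Rightarrow> complex)) \<Rightarrow> complex) \<Rightarrow> bool" where
  "bop_singular \<phi> \<longleftrightarrow> (\<forall>T. bop_compact T \<longrightarrow> \<phi> T = 0)"

end

theory Submission
  imports Defs
begin


definition evec :: "'a \<Rightarrow> 'a \<Rightarrow> complex" where
  "evec x = (\<lambda>y. if y = x then 1 else 0)"

lemma ell2_iff: "f \<in> ell2 \<longleftrightarrow> (\<lambda>x. (norm (f x))\<^sup>2) summable_on UNIV"
  by (simp add: ell2_def)

lemma ell2_zero[simp]: "(\<lambda>_. 0) \<in> ell2"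
  by (simp add: ell2_def)

lemma sq_sum_le: "((a::real) + b)\<^sup>2 \<le> 2 * a\<^sup>2 + 2 * b\<^sup>2"
proof -
  have "0 \<le> (a - b)\<^sup>2" by simp
  thus ?thesis by (simp add: power2_eq_square algebra_simps)
qed

lemma ell2_lin:
  assumes "f \<in> ell2" "g \<in> ell2"
  shows "(\<lambda>x. f x + c * g x) \<in> ell2"
proof -
  have s: "(\<lambda>x. 2 * (norm (f x))\<^sup>2 + 2 * (norm c)\<^sup>2 * (norm (g x))\<^sup>2) summable_on UNIV"
    using assms by (intro summable_on_add summable_on_cmult_right) (auto simp: ell2_def)
  have "(norm (f x + c * g x))\<^sup>2 \<le> 2 * (norm (f x))\<^sup>2 + 2 * (norm c)\<^sup>2 * (norm (g x))\<^sup>2" for x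
  proof -
    have "norm (f x + c * g x) \<le> norm (f x) + norm c * norm (g x)"
      by (metis norm_mult norm_triangle_ineq)
    hence "(norm (f x + c * g x))\<^sup>2 \<le> (norm (f x) + norm c * norm (g x))\<^sup>2"
      by (simp add: power_mono)
    also have "\<dots> \<le> 2 * (norm (f x))\<^sup>2 + 2 * (norm c)\<^sup>2 * (norm (g x))\<^sup>2"
      using sq_sum_le[of "norm (f x)" "norm c * norm (g x)"] by (simp add: power_mult_distrib)
    finally show ?thesis .
  qed
  then show ?thesis unfolding ell2_def
    by (auto intro!: summable_on_comparison_test[OF s])
qed

lemma linf_iff: "f \<in> linf \<longleftrightarrow> (\<exists>B. \<forall>x. norm (f x) \<le> B)"
  by (simp add: linf_def bounded_iff)

lemma ell2_norm_nonneg[simp]: "ell2_norm f \<ge> 0"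
  by (simp add: ell2_norm_def infsum_nonneg)

lemma ell2_norm_sq: "(ell2_norm f)\<^sup>2 = (\<Sum>\<^sub>\<infinity>x. (norm (f x))\<^sup>2)"
  by (simp add: ell2_norm_def infsum_nonneg)

lemma infsum_single:
  assumes "\<And>y. y \<noteq> x \<Longrightarrow> h y = 0"
  shows "infsum h UNIV = h x"
proof -
  have "infsum h UNIV = infsum h {x}" by (rule infsum_cong_neutral) (use assms in auto)
  thus ?thesis by simp
qed

lemma ell2_point_le:
  assumes "f \<in> ell2" shows "norm (f x) \<le> ell2_norm f"
proof -
  have "(norm (f x))\<^sup>2 \<le> (\<Sum>\<^sub>\<infinity>y. (norm (f y))\<^sup>2)"
    using finite_sum_le_infsum[of "\<lambda>y. (norm (f y))\<^sup>2" UNIV "{x}"] assms by (simp add: ell2_def)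
  thus ?thesis unfolding ell2_norm_def by (simp add: real_le_rsqrt)
qed

lemma ell2_norm_zero:
  assumes "f \<in> ell2" "ell2_norm f = 0" shows "f = (\<lambda>_. 0)"
proof
  fix x
  have "(\<Sum>\<^sub>\<infinity>y. (norm (f y))\<^sup>2) = 0" using assms(2) ell2_norm_sq[of f] by simp
  hence "(norm (f x))\<^sup>2 = 0"
    using nonneg_infsum_le_0D[of "\<lambda>y. (norm (f y))\<^sup>2" UNIV x] assms(1) by (simp add: ell2_def)
  thus "f x = 0" by simp
qed

lemma ell2_norm_zero_iff:
  assumes "f \<in> ell2" shows "ell2_norm f = 0 \<longleftrightarrow> f = (\<lambda>_. 0)"
  using ell2_norm_zero[OF assms] by (auto simp: ell2_norm_def)

lemma ell2_mult:
  assumes B: "\<And>x. norm (f x) \<le> B" and g: "g \<in> ell2"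
  shows "(\<lambda>x. f x * g x) \<in> ell2" "ell2_norm (\<lambda>x. f x * g x) \<le> B * ell2_norm g"
proof -
  have B0: "B \<ge> 0" using B[of undefined] norm_ge_zero order_trans by blast
  have s: "(\<lambda>x. B\<^sup>2 * (norm (g x))\<^sup>2) summable_on UNIV"
    using g by (intro summable_on_cmult_right) (auto simp: ell2_def)
  have le: "(norm (f x * g x))\<^sup>2 \<le> B\<^sup>2 * (norm (g x))\<^sup>2" for x
  proof -
    have "norm (f x * g x) \<le> B * norm (g x)"
      by (simp add: norm_mult mult_right_mono B)
    hence "(norm (f x * g x))\<^sup>2 \<le> (B * norm (g x))\<^sup>2" by (simp add: power_mono)
    thus ?thesis by (simp add: power_mult_distrib)
  qed
  show fg: "(\<lambda>x. f x * g x) \<in> ell2" unfolding ell2_def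
    by (auto intro!: summable_on_comparison_test[OF s] le)
  have "(\<Sum>\<^sub>\<infinity>x. (norm (f x * g x))\<^sup>2) \<le> (\<Sum>\<^sub>\<infinity>x. B\<^sup>2 * (norm (g x))\<^sup>2)"
    using fg s le by (intro infsum_mono) (auto simp: ell2_def)
  also have "\<dots> = B\<^sup>2 * (\<Sum>\<^sub>\<infinity>x. (norm (g x))\<^sup>2)"
    by (simp add: infsum_cmult_right')
  finally have "sqrt (\<Sum>\<^sub>\<infinity>x. (norm (f x * g x))\<^sup>2) \<le> sqrt (B\<^sup>2 * (\<Sum>\<^sub>\<infinity>x. (norm (g x))\<^sup>2))"
    using real_sqrt_le_mono by blast
  also have "\<dots> = B * ell2_norm g"
    by (simp add: ell2_norm_def real_sqrt_mult B0)
  finally show "ell2_norm (\<lambda>x. f x * g x) \<le> B * ell2_norm g" by (simp add: ell2_norm_def)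
qed

lemma ell2_finite_support: "finite {x. f x \<noteq> 0} \<Longrightarrow> f \<in> ell2"
  unfolding ell2_def mem_Collect_eq by (rule finite_nonzero_values_imp_summable_on) auto

lemma evec_ell2[simp]: "evec x \<in> ell2"
  by (rule ell2_finite_support) (auto simp: evec_def)

lemma evec_norm[simp]: "ell2_norm (evec x) = 1"
  unfolding ell2_norm_def by (subst infsum_single[of x]) (auto simp: evec_def)

lemma infsum_of_real_c:
  assumes "h summable_on A"
  shows "infsum (\<lambda>x. complex_of_real (h x)) A = complex_of_real (infsum h A)"
  by (rule infsumI[OF has_sum_of_real[OF has_sum_infsum[OF assms]]])

lemma inner_summable:
  assumes "f \<in> ell2" "g \<in> ell2"
  shows "(\<lambda>x. cnj (f x) * g x) summable_on UNIV"
proof -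
  have s: "(\<lambda>x. (norm (f x))\<^sup>2 + (norm (g x))\<^sup>2) summable_on UNIV"
    using assms by (intro summable_on_add) (auto simp: ell2_def)
  have "norm (cnj (f x) * g x) \<le> (norm (f x))\<^sup>2 + (norm (g x))\<^sup>2" for x
  proof -
    have "0 \<le> (norm (f x) - norm (g x))\<^sup>2" by simp
    hence "2 * (norm (f x) * norm (g x)) \<le> (norm (f x))\<^sup>2 + (norm (g x))\<^sup>2"
      by (simp add: power2_eq_square algebra_simps)
    moreover have "0 \<le> norm (f x) * norm (g x)" by simp
    ultimately have "norm (f x) * norm (g x) \<le> (norm (f x))\<^sup>2 + (norm (g x))\<^sup>2"
      by linarith
    thus ?thesis by (simp add: norm_mult)
  qed
  hence "(\<lambda>x. norm (cnj (f x) * g x)) summable_on UNIV"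
    using Infinite_Sum.abs_summable_on_comparison_test'[OF s, of "\<lambda>x. cnj (f x) * g x"] by blast
  thus ?thesis by (rule abs_summable_summable)
qed

lemma inner_self:
  assumes "f \<in> ell2" shows "ell2_inner f f = complex_of_real ((ell2_norm f)\<^sup>2)"
proof -
  have "ell2_inner f f = (\<Sum>\<^sub>\<infinity>x. complex_of_real ((norm (f x))\<^sup>2))"
    unfolding ell2_inner_def by (intro infsum_cong) (metis complex_norm_square mult.commute)
  also have "\<dots> = complex_of_real (\<Sum>\<^sub>\<infinity>x. (norm (f x))\<^sup>2)"
    using assms by (intro infsum_of_real_c) (simp add: ell2_def)
  finally show ?thesis by (simp add: ell2_norm_sq)
qed

lemma inner_evec_left: "ell2_inner (evec x) g = g x"
  unfolding ell2_inner_def by (subst infsum_single[of x]) (auto simp: evec_def)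

lemma inner_evec_right: "ell2_inner g (evec x) = cnj (g x)"
  unfolding ell2_inner_def by (subst infsum_single[of x]) (auto simp: evec_def)

lemma two_mult_le: assumes "(t::real) > 0" shows "2 * p * q \<le> t * p\<^sup>2 + q\<^sup>2 / t"
proof -
  have "0 \<le> (t * p - q)\<^sup>2" by simp
  hence "2 * p * q * t \<le> t * t * p\<^sup>2 + q\<^sup>2" by (simp add: power2_eq_square algebra_simps)
  thus ?thesis using assms by (simp add: field_simps power2_eq_square)
qed

lemma minkowski:
  assumes f: "f \<in> ell2" and g: "g \<in> ell2"
  shows "ell2_norm (\<lambda>x. f x + g x) \<le> ell2_norm f + ell2_norm g"
proof (cases "ell2_norm f = 0 \<or> ell2_norm g = 0")
  case True
  then show ?thesis using ell2_norm_zero[OF f] ell2_norm_zero[OF g] by auto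
next
  case False
  define a b where "a = ell2_norm f" and "b = ell2_norm g"
  have a: "a > 0" and b: "b > 0" using False by (auto simp: a_def b_def less_le)
  define t where "t = b / a"
  have t: "t > 0" using a b by (simp add: t_def)
  have fg: "(\<lambda>x. f x + g x) \<in> ell2" using ell2_lin[OF f g, of 1] by simp
  have s: "(\<lambda>x. (1 + t) * (norm (f x))\<^sup>2 + (1 + 1 / t) * (norm (g x))\<^sup>2) summable_on UNIV"
    using f g by (intro summable_on_add summable_on_cmult_right) (auto simp: ell2_def)
  have le: "(norm (f x + g x))\<^sup>2 \<le> (1 + t) * (norm (f x))\<^sup>2 + (1 + 1 / t) * (norm (g x))\<^sup>2" for x
  proof -
    have "(norm (f x + g x))\<^sup>2 \<le> (norm (f x) + norm (g x))\<^sup>2"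
      by (simp add: norm_triangle_ineq power_mono)
    also have "\<dots> = (norm (f x))\<^sup>2 + 2 * norm (f x) * norm (g x) + (norm (g x))\<^sup>2"
      by (simp add: power2_sum)
    also have "\<dots> \<le> (norm (f x))\<^sup>2 + (t * (norm (f x))\<^sup>2 + (norm (g x))\<^sup>2 / t) + (norm (g x))\<^sup>2"
      using two_mult_le[OF t] by simp
    also have "\<dots> = (1 + t) * (norm (f x))\<^sup>2 + (1 + 1 / t) * (norm (g x))\<^sup>2"
      by (simp add: algebra_simps)
    finally show ?thesis .
  qed
  have "(ell2_norm (\<lambda>x. f x + g x))\<^sup>2 \<le> (\<Sum>\<^sub>\<infinity>x. (1 + t) * (norm (f x))\<^sup>2 + (1 + 1 / t) * (norm (g x))\<^sup>2)"
    unfolding ell2_norm_sq using fg s le by (intro infsum_mono) (auto simp: ell2_def)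
  also have "\<dots> = (1 + t) * a\<^sup>2 + (1 + 1 / t) * b\<^sup>2"
  proof -
    have sf: "(\<lambda>x. (1 + t) * (norm (f x))\<^sup>2) summable_on UNIV"
      using f unfolding ell2_def by (intro summable_on_cmult_right) simp
    have sg: "(\<lambda>x. (1 + 1 / t) * (norm (g x))\<^sup>2) summable_on UNIV"
      using g unfolding ell2_def by (intro summable_on_cmult_right) simp
    show ?thesis
      unfolding infsum_add[OF sf sg] infsum_cmult_right' a_def b_def ell2_norm_sq ..
  qed
  also have "\<dots> = (a + b)\<^sup>2"
  proof -
    have "(1 + t) * a\<^sup>2 = a\<^sup>2 + a * b" using a by (simp add: t_def power2_eq_square field_simps)
    moreover have "(1 + 1 / t) * b\<^sup>2 = b\<^sup>2 + a * b" using a b by (simp add: t_def power2_eq_square field_simps)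
    ultimately show ?thesis by (simp add: power2_sum)
  qed
  finally have sq: "(ell2_norm (\<lambda>x. f x + g x))\<^sup>2 \<le> (ell2_norm f + ell2_norm g)\<^sup>2"
    by (simp only: a_def b_def)
  show ?thesis using power2_le_imp_le[OF sq] by (metis add_nonneg_nonneg ell2_norm_nonneg)
qed

lemma ell2_diff: "f \<in> ell2 \<Longrightarrow> g \<in> ell2 \<Longrightarrow> (\<lambda>x. f x - g x) \<in> ell2"
  using ell2_lin[of f g "-1"] by simp

lemma ell2_add: "f \<in> ell2 \<Longrightarrow> g \<in> ell2 \<Longrightarrow> (\<lambda>x. f x + g x) \<in> ell2"
  using ell2_lin[of f g 1] by (simp only: mult_1)

lemma ell2_dist_commute: "ell2_norm (\<lambda>x. f x - g x) = ell2_norm (\<lambda>x. g x - f x)"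
proof -
  have "(\<lambda>x. (norm (f x - g x))\<^sup>2) = (\<lambda>x. (norm (g x - f x))\<^sup>2)"
    by (rule ext) (metis norm_minus_commute)
  thus ?thesis unfolding ell2_norm_def by simp
qed

lemma ell2_dist_zero: "f \<in> ell2 \<Longrightarrow> g \<in> ell2 \<Longrightarrow> ell2_norm (\<lambda>x. f x - g x) = 0 \<longleftrightarrow> f = g"
  by (simp add: ell2_norm_zero_iff ell2_diff fun_eq_iff)

lemma ell2_dist_tri: "f \<in> ell2 \<Longrightarrow> g \<in> ell2 \<Longrightarrow> h \<in> ell2 \<Longrightarrow>
   ell2_norm (\<lambda>x. f x - h x) \<le> ell2_norm (\<lambda>x. f x - g x) + ell2_norm (\<lambda>x. g x - h x)"
  using minkowski[OF ell2_diff[of f g] ell2_diff[of g h]] by simp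

lemma ell2_metric_space: "Metric_space ell2 (\<lambda>f g. ell2_norm (\<lambda>x. f x - g x))"
  by (rule Metric_space.intro) (auto simp: ell2_dist_zero ell2_dist_tri ell2_dist_commute[of _ _] intro: ell2_dist_commute)



interpretation L2: Metric_space ell2 "\<lambda>f g. ell2_norm (\<lambda>x. f x - g x)"
  by (rule ell2_metric_space)

lemma mtop_ell2: "mtopology_of ell2_metric = L2.mtopology"
  by (simp add: ell2_metric_def)

lemma mspace_ell2: "mspace ell2_metric = ell2"
  by (simp add: ell2_metric_def)

lemma mdist_ell2: "mdist ell2_metric = (\<lambda>f g. ell2_norm (\<lambda>x. f x - g x))"
  by (simp add: ell2_metric_def)

lemma cnonneg_iff: "cnonneg z \<longleftrightarrow> 0 \<le> z"
  by (auto simp: cnonneg_def less_eq_complex_def)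

lemma cnonneg_infsum:
  assumes "\<And>x. cnonneg (h x)" shows "cnonneg (infsum h A)"
proof (cases "h summable_on A")
  case True
  then show ?thesis using assms by (simp add: cnonneg_iff infsum_nonneg_complex)
next
  case False
  then show ?thesis by (simp add: infsum_not_exists cnonneg_def)
qed

definition Mop :: "('a \<Rightarrow> complex) \<Rightarrow> ('a \<Rightarrow> complex) \<Rightarrow> ('a \<Rightarrow> complex)" where
  "Mop f = (\<lambda>g. if g \<in> ell2 then (\<lambda>x. f x * g x) else (\<lambda>_. 0))"

lemma Mop_in: "f \<in> linf \<Longrightarrow> g \<in> ell2 \<Longrightarrow> Mop f g \<in> ell2"
  using ell2_mult(1) by (auto simp: Mop_def linf_iff)

lemma Mop_bop: assumes "f \<in> linf" shows "Mop f \<in> bop"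
proof -
  obtain B where B: "\<And>x. norm (f x) \<le> B" using assms by (auto simp: linf_iff)
  have "\<forall>g\<in>ell2. Mop f g \<in> ell2" using Mop_in assms by blast
  moreover have "\<forall>g\<in>ell2. \<forall>h\<in>ell2. \<forall>c. Mop f (\<lambda>x. g x + c * h x) = (\<lambda>x. Mop f g x + c * Mop f h x)"
    by (auto simp: Mop_def ell2_lin algebra_simps)
  moreover have "\<forall>g\<in>ell2. ell2_norm (Mop f g) \<le> B * ell2_norm g"
    using ell2_mult(2)[OF B] by (auto simp: Mop_def)
  moreover have "\<forall>g. g \<notin> ell2 \<longrightarrow> Mop f g = (\<lambda>_. 0)" by (simp add: Mop_def)
  ultimately show ?thesis unfolding bop_def by blast
qed

lemma Mop_lin: "Mop (\<lambda>x. f x + c * g x) = bop_add_scaled (Mop f) c (Mop g)"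
  by (auto simp: Mop_def bop_add_scaled_def fun_eq_iff algebra_simps)

lemma Mop_one: "Mop (\<lambda>_. 1) = bop_id"
  by (auto simp: Mop_def bop_id_def fun_eq_iff)

lemma Mop_positive:
  assumes "f \<in> linf" "\<And>x. cnonneg (f x)" shows "bop_positive (Mop f)"
  unfolding bop_positive_def
proof (intro conjI ballI)
  show "Mop f \<in> bop" by (rule Mop_bop[OF assms(1)])
  fix g :: "'a \<Rightarrow> complex" assume g: "g \<in> ell2"
  have h1: "cnj (g x) * (f x * g x) = f x * complex_of_real ((norm (g x))\<^sup>2)" for x
  proof -
    have "cnj (g x) * g x = complex_of_real ((norm (g x))\<^sup>2)" by (metis complex_norm_square mult.commute)
    thus ?thesis by (metis mult.assoc mult.commute)
  qed
  have h2: "cnonneg (f x * complex_of_real ((norm (g x))\<^sup>2))" for x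
    using assms(2)[of x] by (simp add: cnonneg_def)
  have "ell2_inner g (Mop f g) = (\<Sum>\<^sub>\<infinity>x. f x * complex_of_real ((norm (g x))\<^sup>2))"
    unfolding ell2_inner_def Mop_def by (simp only: g if_True h1)
  moreover have "cnonneg (\<Sum>\<^sub>\<infinity>x. f x * complex_of_real ((norm (g x))\<^sup>2))"
    by (rule cnonneg_infsum[OF h2])
  ultimately show "cnonneg (ell2_inner g (Mop f g))" by (simp only:)
qed

lemma linf_proj_vals: "linf_proj p \<Longrightarrow> p x = 0 \<or> p x = 1"
  unfolding linf_proj_def by (metis mult_cancel_right1 mult_eq_0_iff) 

lemma Mop_proj: assumes "linf_proj p" shows "bop_proj (Mop p)"
  unfolding bop_proj_def
proof (intro conjI ballI allI)
  have pl: "p \<in> linf" using assms by (simp add: linf_proj_def)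
  show "Mop p \<in> bop" by (rule Mop_bop[OF pl])
  have pp: "p x * p x = p x" "cnj (p x) = p x" for x using assms by (auto simp: linf_proj_def)
  show "Mop p \<circ> Mop p = Mop p"
  proof
    fix g show "(Mop p \<circ> Mop p) g = Mop p g"
      using Mop_in[OF pl] pp by (auto simp: Mop_def fun_eq_iff mult.assoc[symmetric])
  qed
  fix f g :: "'a \<Rightarrow> complex" assume f: "f \<in> ell2" and g: "g \<in> ell2"
  show "ell2_inner (Mop p f) g = ell2_inner f (Mop p g)"
    using f g pp by (simp add: Mop_def ell2_inner_def algebra_simps)
qed

lemma evec_linf: "evec x \<in> linf"
  unfolding linf_iff by (rule exI[of _ 1]) (auto simp: evec_def)

lemma scaled_evec_ell2: "(\<lambda>y. c * evec x y) \<in> ell2"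
  by (rule ell2_finite_support) (auto simp: evec_def)

lemma norm_scaled_evec: "ell2_norm (\<lambda>y. c * evec x y) = norm c"
  unfolding ell2_norm_def by (subst infsum_single[of x]) (auto simp: evec_def)

lemma cont_scaled_evec: "continuous_map euclidean L2.mtopology (\<lambda>c::complex. \<lambda>y. c * evec x y)"
proof -
  have "Lipschitz_continuous_map euclidean_metric ell2_metric (\<lambda>c::complex. \<lambda>y. c * evec x y)"
    unfolding Lipschitz_continuous_map_def mspace_ell2 mdist_ell2
  proof (intro conjI exI ballI)
    show "(\<lambda>c::complex. \<lambda>y. c * evec x y) \<in> mspace euclidean_metric \<rightarrow> ell2"
      by (intro Pi_I scaled_evec_ell2)
    fix c d :: complex
    have "(\<lambda>y. c * evec x y - d * evec x y) = (\<lambda>y. (c - d) * evec x y)"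
      by (simp add: algebra_simps)
    thus "ell2_norm (\<lambda>y. c * evec x y - d * evec x y) \<le> 1 * mdist euclidean_metric c d"
      by (simp add: norm_scaled_evec dist_norm)
  qed
  from Lipschitz_continuous_imp_continuous_map[OF this] show ?thesis by (simp add: mtop_ell2)
qed

lemma Mop_evec_compact: "bop_compact (Mop (evec x))"
proof -
  define K where "K = (\<lambda>c::complex. \<lambda>y. c * evec x y) ` cball 0 1"
  have cK: "compactin L2.mtopology K" unfolding K_def
    by (rule image_compactin[OF _ cont_scaled_evec]) simp
  have clK: "closedin L2.mtopology K"
    by (rule compactin_imp_closedin[OF L2.Hausdorff_space_mtopology cK])
  have sub: "Mop (evec x) ` {f\<in>ell2. ell2_norm f \<le> 1} \<subseteq> K"
  proof
    fix h assume "h \<in> Mop (evec x) ` {f\<in>ell2. ell2_norm f \<le> 1}"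
    then obtain f where f: "f\<in>ell2" "ell2_norm f \<le> 1" and h: "h = Mop (evec x) f" by auto
    have "h = (\<lambda>y. f x * evec x y)" using f h by (auto simp: Mop_def evec_def fun_eq_iff)
    moreover have "f x \<in> cball 0 1" using ell2_point_le[OF f(1), of x] f(2) by simp
    ultimately show "h \<in> K" unfolding K_def by blast
  qed
  have "L2.mtopology closure_of (Mop (evec x) ` {f\<in>ell2. ell2_norm f \<le> 1}) \<subseteq> K"
    by (rule closure_of_minimal[OF sub clK])
  hence "compactin L2.mtopology (L2.mtopology closure_of (Mop (evec x) ` {f\<in>ell2. ell2_norm f \<le> 1}))"
    by (rule closed_compactin[OF cK]) simp
  thus ?thesis using Mop_bop[OF evec_linf] by (simp add: bop_compact_def mtop_ell2)
qed

lemma ell2_finite_big: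
  assumes f: "f \<in> ell2" and e: "e > 0"
  shows "finite {y. e \<le> norm (f y)}"
proof (rule ccontr)
  assume inf: "infinite {y. e \<le> norm (f y)}"
  define S where "S = (\<Sum>\<^sub>\<infinity>y. (norm (f y))\<^sup>2)"
  obtain n :: nat where n: "S / e\<^sup>2 < real n" using reals_Archimedean2 by blast
  obtain F where F: "finite F" "card F = n" "F \<subseteq> {y. e \<le> norm (f y)}"
    using infinite_arbitrarily_large[OF inf] by blast
  have "(\<Sum>y\<in>F. (norm (f y))\<^sup>2) \<le> S"
    unfolding S_def using f F(1) by (intro finite_sum_le_infsum) (auto simp: ell2_def)
  moreover have "(\<Sum>y\<in>F. e\<^sup>2) \<le> (\<Sum>y\<in>F. (norm (f y))\<^sup>2)"
    using F(3) e by (intro sum_mono power_mono) auto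
  moreover have "(\<Sum>y\<in>F. e\<^sup>2) = real n * e\<^sup>2" using F(2) by simp
  moreover have "S < real n * e\<^sup>2" using n e by (simp add: field_simps)
  ultimately show False by linarith
qed

lemma inj_eventually_outside:
  fixes s :: "nat \<Rightarrow> 'b" assumes "inj s" "finite A" shows "\<exists>N. \<forall>n\<ge>N. s n \<notin> A"
proof -
  have "finite (s -` A)" using assms by (simp add: finite_vimageI)
  hence "\<exists>N. \<forall>n\<in>s -` A. n < N" using finite_nat_set_iff_bounded[of "s -` A"] by (simp only:)
  then obtain N where N: "\<forall>n\<in>s -` A. n < N" by blast
  have "\<forall>n\<ge>N. s n \<notin> A"
  proof (intro allI impI)
    fix n assume "N \<le> n"
    thus "s n \<notin> A" using N[rule_format, of n] by (auto simp: vimage_def)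
  qed
  thus ?thesis by blast
qed

lemma bop_bound: "T \<in> bop \<Longrightarrow> \<exists>K. \<forall>f\<in>ell2. ell2_norm (T f) \<le> K * ell2_norm f"
  by (simp add: bop_def)

lemma bop_ell2: "T \<in> bop \<Longrightarrow> f \<in> ell2 \<Longrightarrow> T f \<in> ell2"
  by (simp add: bop_def)

lemma bop_diag_bounded: "T \<in> bop \<Longrightarrow> \<exists>K. \<forall>x. norm (T (evec x) x) \<le> K"
proof -
  assume T: "T \<in> bop"
  then obtain K where K: "\<forall>f\<in>ell2. ell2_norm (T f) \<le> K * ell2_norm f" using bop_bound by blast
  have "norm (T (evec x) x) \<le> K" for x
    using ell2_point_le[OF bop_ell2[OF T evec_ell2], of x x] K[rule_format, OF evec_ell2, of x] by simp
  thus ?thesis by blast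
qed

lemma compact_diag_finite:
  assumes T: "bop_compact T" and e: "e > 0"
  shows "finite {x. e \<le> norm (T (evec x) x)}"
proof (rule ccontr)
  define S where "S = {x. e \<le> norm (T (evec x) x)}"
  assume "infinite {x. e \<le> norm (T (evec x) x)}"
  then obtain \<sigma> :: "nat \<Rightarrow> 'a" where \<sigma>: "inj \<sigma>" "range \<sigma> \<subseteq> S"
    using infinite_countable_subset unfolding S_def by blast
  have Tb: "T \<in> bop" using T by (simp add: bop_compact_def)
  define C where "C = L2.mtopology closure_of (T ` {f\<in>ell2. ell2_norm f \<le> 1})"
  have cC: "compactin L2.mtopology C" using T by (simp add: bop_compact_def C_def mtop_ell2)
  define v where "v k = T (evec (\<sigma> k))" for k
  have "range v \<subseteq> C"
  proof -
    have "range v \<subseteq> T ` {f\<in>ell2. ell2_norm f \<le> 1}" by (auto simp: v_def)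
    moreover have "T ` {f\<in>ell2. ell2_norm f \<le> 1} \<subseteq> topspace L2.mtopology"
      using bop_ell2[OF Tb] by auto
    hence "T ` {f\<in>ell2. ell2_norm f \<le> 1} \<subseteq> C" unfolding C_def by (rule closure_of_subset)
    ultimately show ?thesis by (rule order_trans)
  qed
  then obtain l r where lr: "l \<in> C" "strict_mono r" "limitin L2.mtopology (v \<circ> r) l sequentially"
    using cC unfolding L2.compactin_sequentially by blast
  from lr(3) have l: "l \<in> ell2"
    and lim: "\<And>d. d > 0 \<Longrightarrow> \<exists>N. \<forall>n\<ge>N. (v \<circ> r) n \<in> ell2 \<and> ell2_norm (\<lambda>x. (v \<circ> r) n x - l x) < d"
    unfolding L2.limit_metric_sequentially by auto
  obtain N1 where N1: "\<forall>n\<ge>N1. (v \<circ> r) n \<in> ell2 \<and> ell2_norm (\<lambda>x. (v \<circ> r) n x - l x) < e / 2"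
    using lim[of "e/2"] e by auto
  have inj2: "inj (\<sigma> \<circ> r)" using \<sigma>(1) lr(2) by (simp add: inj_compose strict_mono_imp_inj_on)
  obtain N2 where N2: "\<forall>n\<ge>N2. (\<sigma> \<circ> r) n \<notin> {y. e / 2 \<le> norm (l y)}"
    using inj_eventually_outside[OF inj2 ell2_finite_big[OF l, of "e/2"]] e by auto
  define n where "n = max N1 N2"
  define y where "y = \<sigma> (r n)"
  have "e \<le> norm (v (r n) y)" using \<sigma>(2) by (auto simp: S_def v_def y_def)
  also have "\<dots> \<le> norm (l y) + norm (v (r n) y - l y)"
    by (metis add.commute diff_add_cancel norm_triangle_ineq)
  also have "norm (v (r n) y - l y) \<le> ell2_norm (\<lambda>x. (v \<circ> r) n x - l x)"
    using ell2_point_le[OF ell2_diff[OF _ l], of "(v \<circ> r) n" y] N1 by (auto simp: n_def)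
  also have "\<dots> < e / 2" using N1 by (auto simp: n_def)
  also have "norm (l y) < e / 2" using N2[rule_format, of n] by (auto simp: n_def y_def)
  finally show False by simp
qed



definition simple :: "('a \<Rightarrow> real) \<Rightarrow> bool" where
  "simple s \<longleftrightarrow> finite (range s)"

definition bnd :: "('a \<Rightarrow> real) \<Rightarrow> bool" where
  "bnd f \<longleftrightarrow> (\<exists>B. \<forall>x. \<bar>f x\<bar> \<le> B)"

definition Sint :: "('a set \<Rightarrow> real) \<Rightarrow> ('a \<Rightarrow> real) \<Rightarrow> real" where
  "Sint \<mu> s = (\<Sum>v\<in>range s. v * \<mu> (s -` {v}))"

definition rnd :: "nat \<Rightarrow> ('a \<Rightarrow> real) \<Rightarrow> 'a \<Rightarrow> real" where
  "rnd n f = (\<lambda>x. of_int \<lfloor>f x * real (Suc n)\<rfloor> / real (Suc n))"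

definition Iint :: "('a set \<Rightarrow> real) \<Rightarrow> ('a \<Rightarrow> real) \<Rightarrow> real" where
  "Iint \<mu> f = lim (\<lambda>n. Sint \<mu> (rnd n f))"

lemma simple_lin: "simple s \<Longrightarrow> simple t \<Longrightarrow> simple (\<lambda>x. s x + c * t x)"
proof -
  assume "simple s" "simple t"
  hence "finite ((\<lambda>(a, b). a + c * b) ` (range s \<times> range t))" by (simp add: simple_def)
  moreover have "range (\<lambda>x. s x + c * t x) \<subseteq> (\<lambda>(a, b). a + c * b) ` (range s \<times> range t)" by auto
  ultimately show ?thesis unfolding simple_def by (rule finite_subset[rotated])
qed

lemma simple_const: "simple (\<lambda>_. c)"
  by (simp add: simple_def)

lemma simple_bnd: "simple s \<Longrightarrow> bnd s"
proof -
  assume "simple s"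
  hence "finite (abs ` range s)" by (simp add: simple_def)
  hence "\<forall>x. \<bar>s x\<bar> \<le> Max (abs ` range s)" by (auto intro: Max_ge)
  thus ?thesis by (auto simp: bnd_def)
qed

lemma bnd_lin: "bnd f \<Longrightarrow> bnd g \<Longrightarrow> bnd (\<lambda>x. f x + c * g x)"
proof -
  assume "bnd f" "bnd g"
  then obtain A B where A: "\<forall>x. \<bar>f x\<bar> \<le> A" and B: "\<forall>x. \<bar>g x\<bar> \<le> B" by (auto simp: bnd_def)
  have "\<bar>f x + c * g x\<bar> \<le> A + \<bar>c\<bar> * B" for x
  proof -
    have "\<bar>f x + c * g x\<bar> \<le> \<bar>f x\<bar> + \<bar>c\<bar> * \<bar>g x\<bar>" by (metis abs_mult abs_triangle_ineq)
    also have "\<dots> \<le> A + \<bar>c\<bar> * B" using A B by (intro add_mono mult_left_mono) auto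
    finally show ?thesis .
  qed
  thus ?thesis by (auto simp: bnd_def)
qed

lemma rnd_close: "\<bar>f x - rnd n f x\<bar> \<le> inverse (real (Suc n))"
proof -
  define N where "N = real (Suc n)"
  have N: "N > 0" by (simp add: N_def)
  have "of_int \<lfloor>f x * N\<rfloor> \<le> f x * N" "f x * N < of_int \<lfloor>f x * N\<rfloor> + 1" by linarith+
  moreover have eq: "f x - of_int \<lfloor>f x * N\<rfloor> / N = (f x * N - of_int \<lfloor>f x * N\<rfloor>) / N"
    using N by (simp add: field_simps)
  ultimately have n0: "0 \<le> f x * N - of_int \<lfloor>f x * N\<rfloor>" and n1: "f x * N - of_int \<lfloor>f x * N\<rfloor> \<le> 1"
    by linarith+
  have "0 \<le> f x - of_int \<lfloor>f x * N\<rfloor> / N" "f x - of_int \<lfloor>f x * N\<rfloor> / N \<le> 1 / N"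
    unfolding eq using N n0 divide_right_mono[OF n1, of N] by auto
  moreover have "rnd n f x = of_int \<lfloor>f x * N\<rfloor> / N" by (simp add: rnd_def N_def)
  moreover have "inverse (real (Suc n)) = 1 / N" by (simp add: N_def inverse_eq_divide)
  moreover have "0 \<le> 1 / N" using N by simp
  ultimately show ?thesis unfolding abs_le_iff by (intro conjI; linarith)
qed

lemma rnd_nonneg: "f x \<ge> 0 \<Longrightarrow> rnd n f x \<ge> 0"
  by (simp add: rnd_def)

lemma rnd_simple: assumes "bnd f" shows "simple (rnd n f)"
proof -
  obtain B where B: "\<forall>x. \<bar>f x\<bar> \<le> B" using assms by (auto simp: bnd_def)
  define N where "N = real (Suc n)"
  have N: "N > 0" by (simp add: N_def)
  define M where "M = \<lceil>B * N\<rceil> + 1"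
  have "range (rnd n f) \<subseteq> (\<lambda>k. of_int k / N) ` {-M..M}"
  proof
    fix y assume "y \<in> range (rnd n f)"
    then obtain x where y: "y = of_int \<lfloor>f x * N\<rfloor> / N" by (auto simp: rnd_def N_def)
    have "\<bar>f x * N\<bar> \<le> B * N" using B N by (simp add: abs_mult mult_right_mono)
    hence yb: "f x * N \<le> B * N" "- (B * N) \<le> f x * N" by (simp_all add: abs_le_iff)
    have c1: "of_int \<lfloor>f x * N\<rfloor> \<le> f x * N" "f x * N < of_int \<lfloor>f x * N\<rfloor> + 1" by linarith+
    have c2: "B * N \<le> of_int \<lceil>B * N\<rceil>" by (rule le_of_int_ceiling)
    have r1: "real_of_int \<lfloor>f x * N\<rfloor> \<le> real_of_int M"
      unfolding M_def using yb c1 c2 by (simp only: of_int_add of_int_1; linarith)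
    have r2: "real_of_int (-M) \<le> real_of_int \<lfloor>f x * N\<rfloor>"
      unfolding M_def using yb c1 c2 by (simp only: of_int_minus of_int_add of_int_1; linarith)
    note r1 r2
    hence "\<lfloor>f x * N\<rfloor> \<in> {-M..M}" by (simp only: of_int_le_iff atLeastAtMost_iff; simp)
    thus "y \<in> (\<lambda>k. of_int k / N) ` {-M..M}" using y by blast
  qed
  thus ?thesis unfolding simple_def by (rule finite_subset) simp
qed

locale fam =
  fixes \<mu> :: "'a set \<Rightarrow> real"
  assumes fa: "fa_prob_measure \<mu>"
begin

lemma mu_nonneg: "\<mu> A \<ge> 0" using fa by (simp add: fa_prob_measure_def)
lemma mu_univ: "\<mu> UNIV = 1" using fa by (simp add: fa_prob_measure_def)
lemma mu_add: "A \<inter> B = {} \<Longrightarrow> \<mu> (A \<union> B) = \<mu> A + \<mu> B" using fa by (simp add: fa_prob_measure_def)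
lemma mu_empty: "\<mu> {} = 0"
proof -
  have "\<mu> ({} \<union> {}) = \<mu> {} + \<mu> {}" by (rule mu_add) simp
  thus ?thesis by simp
qed

lemma mu_mono: assumes "A \<subseteq> B" shows "\<mu> A \<le> \<mu> B"
proof -
  have "B = A \<union> (B - A)" using assms by auto
  hence "\<mu> B = \<mu> A + \<mu> (B - A)" using mu_add[of A "B - A"] by (metis Diff_disjoint)
  thus ?thesis using mu_nonneg[of "B - A"] by linarith
qed

lemma fin_add: "finite I \<Longrightarrow> disjoint_family_on B I \<Longrightarrow> \<mu> (\<Union>i\<in>I. B i) = (\<Sum>i\<in>I. \<mu> (B i))"
proof (induction I rule: finite_induct)
  case empty
  then show ?case by (simp add: mu_empty)
next
  case (insert i I)
  have d: "disjoint_family_on B I" using insert.prems disjoint_family_on_mono by blast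
  have "B i \<inter> (\<Union>j\<in>I. B j) = {}" using insert.prems insert.hyps(2)
    by (fastforce simp: disjoint_family_on_def)
  hence "\<mu> (\<Union>j\<in>insert i I. B j) = \<mu> (B i) + \<mu> (\<Union>j\<in>I. B j)" using mu_add by simp
  then show ?case using insert.IH[OF d] insert.hyps by simp
qed

lemma S_factor:
  assumes Y: "finite Y" "range h \<subseteq> Y" and sg: "\<And>x. s x = g (h x)"
  shows "Sint \<mu> s = (\<Sum>y\<in>Y. g y * \<mu> (h -` {y}))"
proof -
  have rs: "range s \<subseteq> g ` Y" using Y(2) sg by auto
  have pre: "s -` {v} = (\<Union>y\<in>{y\<in>Y. g y = v}. h -` {y})" for v
    using Y(2) sg by (auto simp: image_subset_iff)
  have mv: "\<mu> (s -` {v}) = (\<Sum>y\<in>{y\<in>Y. g y = v}. \<mu> (h -` {y}))" for v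
    unfolding pre by (rule fin_add) (use Y(1) in \<open>auto simp: disjoint_family_on_def\<close>)
  have "Sint \<mu> s = (\<Sum>v\<in>g ` Y. v * \<mu> (s -` {v}))"
    unfolding Sint_def
  proof (rule sum.mono_neutral_left)
    show "finite (g ` Y)" using Y(1) by simp
    show "range s \<subseteq> g ` Y" by (rule rs)
    show "\<forall>v\<in>g ` Y - range s. v * \<mu> (s -` {v}) = 0"
    proof
      fix v assume "v \<in> g ` Y - range s"
      hence "s -` {v} = {}" by (auto simp: image_iff) (metis rangeI)
      thus "v * \<mu> (s -` {v}) = 0" by (simp add: mu_empty)
    qed
  qed
  also have "\<dots> = (\<Sum>v\<in>g ` Y. \<Sum>y\<in>{y\<in>Y. g y = v}. g y * \<mu> (h -` {y}))"
    unfolding mv sum_distrib_left by (intro sum.cong refl) auto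
  also have "\<dots> = (\<Sum>y\<in>Y. g y * \<mu> (h -` {y}))"
    by (rule sum.group) (use Y(1) in auto)
  finally show ?thesis .
qed

lemma S_lin:
  assumes s: "simple s" and t: "simple t"
  shows "Sint \<mu> (\<lambda>x. s x + c * t x) = Sint \<mu> s + c * Sint \<mu> t"
proof -
  define h where "h = (\<lambda>x. (s x, t x))"
  have fY: "finite (range h)"
  proof -
    have "range h \<subseteq> range s \<times> range t" by (auto simp: h_def)
    thus ?thesis using s t by (auto simp: simple_def intro: finite_subset)
  qed
  have 1: "Sint \<mu> (\<lambda>x. s x + c * t x) = (\<Sum>y\<in>range h. (fst y + c * snd y) * \<mu> (h -` {y}))"
    by (rule S_factor[OF fY]) (auto simp: h_def)
  have 2: "Sint \<mu> s = (\<Sum>y\<in>range h. fst y * \<mu> (h -` {y}))"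
    by (rule S_factor[OF fY]) (auto simp: h_def)
  have 3: "Sint \<mu> t = (\<Sum>y\<in>range h. snd y * \<mu> (h -` {y}))"
    by (rule S_factor[OF fY]) (auto simp: h_def)
  show ?thesis unfolding 1 2 3
    by (simp add: algebra_simps sum.distrib sum_distrib_left)
qed

lemma S_mono:
  assumes s: "simple s" and t: "simple t" and le: "\<And>x. s x \<le> t x"
  shows "Sint \<mu> s \<le> Sint \<mu> t"
proof -
  define h where "h = (\<lambda>x. (s x, t x))"
  have fY: "finite (range h)"
  proof -
    have "range h \<subseteq> range s \<times> range t" by (auto simp: h_def)
    thus ?thesis using s t by (auto simp: simple_def intro: finite_subset)
  qed
  have 2: "Sint \<mu> s = (\<Sum>y\<in>range h. fst y * \<mu> (h -` {y}))"
    by (rule S_factor[OF fY]) (auto simp: h_def)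
  have 3: "Sint \<mu> t = (\<Sum>y\<in>range h. snd y * \<mu> (h -` {y}))"
    by (rule S_factor[OF fY]) (auto simp: h_def)
  show ?thesis unfolding 2 3
  proof (rule sum_mono)
    fix y assume "y \<in> range h"
    then obtain x where "y = (s x, t x)" by (auto simp: h_def)
    thus "fst y * \<mu> (h -` {y}) \<le> snd y * \<mu> (h -` {y})"
      using le[of x] mu_nonneg by (simp add: mult_right_mono)
  qed
qed

lemma S_const: "Sint \<mu> (\<lambda>_. c) = c"
  by (simp add: Sint_def mu_univ)

lemma S_ind: "Sint \<mu> (\<lambda>x. if x \<in> A then 1 else 0) = \<mu> A"
proof -
  have "Sint \<mu> (\<lambda>x. if x \<in> A then 1 else 0) =
        (\<Sum>b\<in>UNIV. (if b then 1 else 0) * \<mu> ((\<lambda>x. x \<in> A) -` {b}))"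
    by (rule S_factor) auto
  also have "\<dots> = \<mu> A" by (simp add: UNIV_bool vimage_def)
  finally show ?thesis .
qed

lemma S_close:
  assumes s: "simple s" and t: "simple t" and le: "\<And>x. \<bar>s x - t x\<bar> \<le> e"
  shows "\<bar>Sint \<mu> s - Sint \<mu> t\<bar> \<le> e"
proof -
  have l1: "s x \<le> t x + e * 1" and l2: "t x \<le> s x + e * 1" for x
    using le[of x] by (simp_all add: abs_le_iff)
  have "Sint \<mu> s \<le> Sint \<mu> (\<lambda>x. t x + e * 1)"
    using l1 by (intro S_mono s simple_lin t simple_const)
  also have "\<dots> = Sint \<mu> t + e" using S_lin[OF t simple_const, of e 1] S_const by simp
  finally have a: "Sint \<mu> s \<le> Sint \<mu> t + e" .
  have "Sint \<mu> t \<le> Sint \<mu> (\<lambda>x. s x + e * 1)"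
    using l2 by (intro S_mono s simple_lin t simple_const)
  also have "\<dots> = Sint \<mu> s + e" using S_lin[OF s simple_const, of e 1] S_const by simp
  finally have b: "Sint \<mu> t \<le> Sint \<mu> s + e" .
  show ?thesis using a b by linarith
qed

end



lemma zero_small:
  assumes "\<And>n. \<bar>x::real\<bar> \<le> C * inverse (real (Suc n))"
  shows "x = 0"
proof -
  have "(\<lambda>n. C * inverse (real (Suc n))) \<longlonglongrightarrow> C * 0"
    by (intro tendsto_mult tendsto_const LIMSEQ_inverse_real_of_nat)
  hence "\<bar>x\<bar> \<le> C * 0" by (rule LIMSEQ_le_const) (use assms in auto)
  thus ?thesis by simp
qed

context fam
begin

lemma rnd_cauchy_bound:
  assumes "bnd f"
  shows "\<bar>Sint \<mu> (rnd n f) - Sint \<mu> (rnd m f)\<bar> \<le> inverse (real (Suc n)) + inverse (real (Suc m))"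
proof (rule S_close[OF rnd_simple[OF assms] rnd_simple[OF assms]])
  fix x
  show "\<bar>rnd n f x - rnd m f x\<bar> \<le> inverse (real (Suc n)) + inverse (real (Suc m))"
    using rnd_close[of f x n] rnd_close[of f x m] by linarith
qed

lemma I_conv: assumes f: "bnd f" shows "(\<lambda>n. Sint \<mu> (rnd n f)) \<longlonglongrightarrow> Iint \<mu> f"
proof -
  have "Cauchy (\<lambda>n. Sint \<mu> (rnd n f))"
  proof (rule CauchyI)
    fix e :: real assume e: "0 < e"
    obtain M where M: "inverse (real (Suc M)) < e / 2" using reals_Archimedean[of "e/2"] e by auto
    show "\<exists>M. \<forall>m\<ge>M. \<forall>n\<ge>M. norm (Sint \<mu> (rnd m f) - Sint \<mu> (rnd n f)) < e"
    proof (intro exI allI impI)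
      fix m n assume mn: "M \<le> m" "M \<le> n"
      have i1: "inverse (real (Suc m)) \<le> inverse (real (Suc M))" using mn(1) by (simp add: le_imp_inverse_le)
      have i2: "inverse (real (Suc n)) \<le> inverse (real (Suc M))" using mn(2) by (simp add: le_imp_inverse_le)
      have "\<bar>Sint \<mu> (rnd m f) - Sint \<mu> (rnd n f)\<bar> < e"
        using rnd_cauchy_bound[OF f, of m n] M i1 i2 by linarith
      thus "norm (Sint \<mu> (rnd m f) - Sint \<mu> (rnd n f)) < e" by simp
    qed
  qed
  hence "convergent (\<lambda>n. Sint \<mu> (rnd n f))" by (simp add: Cauchy_convergent_iff)
  thus ?thesis by (simp add: Iint_def convergent_LIMSEQ_iff)
qed

lemma I_close:
  assumes f: "bnd f" and s: "simple s" and le: "\<And>x. \<bar>f x - s x\<bar> \<le> e"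
  shows "\<bar>Iint \<mu> f - Sint \<mu> s\<bar> \<le> e"
proof -
  have b: "\<bar>Sint \<mu> (rnd n f) - Sint \<mu> s\<bar> \<le> inverse (real (Suc n)) + e" for n
  proof (rule S_close[OF rnd_simple[OF f] s])
    fix x
    show "\<bar>rnd n f x - s x\<bar> \<le> inverse (real (Suc n)) + e"
      using rnd_close[of f x n] le[of x] by linarith
  qed
  have lim1: "(\<lambda>n. \<bar>Sint \<mu> (rnd n f) - Sint \<mu> s\<bar>) \<longlonglongrightarrow> \<bar>Iint \<mu> f - Sint \<mu> s\<bar>"
    by (intro tendsto_rabs tendsto_diff I_conv f tendsto_const)
  have lim2: "(\<lambda>n. inverse (real (Suc n)) + e) \<longlonglongrightarrow> 0 + e"
    by (intro tendsto_add LIMSEQ_inverse_real_of_nat tendsto_const)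
  have "\<bar>Iint \<mu> f - Sint \<mu> s\<bar> \<le> 0 + e"
    by (rule LIMSEQ_le[OF lim1 lim2]) (use b in auto)
  thus ?thesis by simp
qed

lemma I_simple: "simple s \<Longrightarrow> Iint \<mu> s = Sint \<mu> s"
  using I_close[OF simple_bnd, of s s 0] by simp

lemma I_const: "Iint \<mu> (\<lambda>_. c) = c"
  by (simp add: I_simple simple_const S_const)

lemma I_ind: "Iint \<mu> (\<lambda>x. if x \<in> A then 1 else 0) = \<mu> A"
proof -
  have "simple (\<lambda>x. if x \<in> A then (1::real) else 0)"
  proof -
    have "range (\<lambda>x. if x \<in> A then (1::real) else 0) \<subseteq> {0, 1}" by auto
    thus ?thesis unfolding simple_def by (rule finite_subset) simp
  qed
  thus ?thesis by (simp add: I_simple S_ind)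
qed

lemma I_lin:
  assumes f: "bnd f" and g: "bnd g"
  shows "Iint \<mu> (\<lambda>x. f x + c * g x) = Iint \<mu> f + c * Iint \<mu> g"
proof -
  have "\<bar>Iint \<mu> (\<lambda>x. f x + c * g x) - Iint \<mu> f - c * Iint \<mu> g\<bar> \<le> (2 + 2 * \<bar>c\<bar>) * inverse (real (Suc n))" for n
  proof -
    define d where "d = inverse (real (Suc n))"
    have d0: "d \<ge> 0" by (simp add: d_def)
    define s t where "s = rnd n f" and "t = rnd n g"
    have ss: "simple s" "simple t" using rnd_simple f g by (auto simp: s_def t_def)
    have h1: "\<bar>Iint \<mu> (\<lambda>x. f x + c * g x) - Sint \<mu> (\<lambda>x. s x + c * t x)\<bar> \<le> d + \<bar>c\<bar> * d"
    proof (rule I_close[OF bnd_lin[OF f g] simple_lin[OF ss]])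
      fix x
      have "\<bar>f x + c * g x - (s x + c * t x)\<bar> \<le> \<bar>f x - s x\<bar> + \<bar>c\<bar> * \<bar>g x - t x\<bar>"
        by (metis (no_types) abs_mult abs_triangle_ineq add_diff_add right_diff_distrib)
      also have "\<dots> \<le> d + \<bar>c\<bar> * d"
        using rnd_close[of f x n] rnd_close[of g x n]
        by (intro add_mono mult_left_mono) (auto simp: s_def t_def d_def)
      finally show "\<bar>f x + c * g x - (s x + c * t x)\<bar> \<le> d + \<bar>c\<bar> * d" .
    qed
    have h2: "\<bar>Iint \<mu> f - Sint \<mu> s\<bar> \<le> d"
      by (rule I_close[OF f ss(1)]) (use rnd_close in \<open>auto simp: s_def d_def\<close>)
    have h3: "\<bar>Iint \<mu> g - Sint \<mu> t\<bar> \<le> d"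
      by (rule I_close[OF g ss(2)]) (use rnd_close in \<open>auto simp: t_def d_def\<close>)
    have h3': "\<bar>c * Iint \<mu> g - c * Sint \<mu> t\<bar> \<le> \<bar>c\<bar> * d"
      using h3 by (metis abs_mult abs_ge_zero mult_left_mono right_diff_distrib)
    have e: "Sint \<mu> (\<lambda>x. s x + c * t x) = Sint \<mu> s + c * Sint \<mu> t" by (rule S_lin[OF ss])
    have "\<bar>Iint \<mu> (\<lambda>x. f x + c * g x) - Iint \<mu> f - c * Iint \<mu> g\<bar> \<le> d + \<bar>c\<bar> * d + d + \<bar>c\<bar> * d"
      using h1 h2 h3' e by linarith
    thus ?thesis by (simp add: d_def algebra_simps)
  qed
  from zero_small[OF this] show ?thesis by simp
qed

lemma I_nonneg:
  assumes f: "bnd f" and nn: "\<And>x. f x \<ge> 0"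
  shows "Iint \<mu> f \<ge> 0"
proof -
  have "Sint \<mu> (\<lambda>_. 0) \<le> Sint \<mu> (rnd n f)" for n
    by (rule S_mono[OF simple_const rnd_simple[OF f]]) (simp add: rnd_nonneg nn)
  hence "0 \<le> Sint \<mu> (rnd n f)" for n by (simp add: S_const)
  thus ?thesis by (intro LIMSEQ_le_const[OF I_conv[OF f]]) auto
qed

end


lemma bnd_Re: "f \<in> linf \<Longrightarrow> bnd (\<lambda>x. Re (f x))"
  unfolding linf_iff bnd_def by (meson abs_Re_le_cmod order_trans)

lemma bnd_Im: "f \<in> linf \<Longrightarrow> bnd (\<lambda>x. Im (f x))"
  unfolding linf_iff bnd_def by (meson abs_Im_le_cmod order_trans)

definition Cint :: "('a set \<Rightarrow> real) \<Rightarrow> ('a \<Rightarrow> complex) \<Rightarrow> complex" where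
  "Cint \<mu> f = Complex (Iint \<mu> (\<lambda>x. Re (f x))) (Iint \<mu> (\<lambda>x. Im (f x)))"

lemma linf_proj_cases: "linf_proj p \<Longrightarrow> p x = 0 \<or> p x = 1"
  unfolding linf_proj_def by (metis mult_cancel_right1 mult_eq_0_iff)

lemma linf_proj_ind: "linf_proj p \<Longrightarrow> p = (\<lambda>x. if x \<in> {y. p y = 1} then 1 else 0)"
  using linf_proj_cases by fastforce

lemma ind_linf_proj: "linf_proj (\<lambda>x. if x \<in> A then 1 else 0)"
  unfolding linf_proj_def linf_iff by (auto intro: exI[of _ 1])

lemma linf_sup_sub:
  assumes P: "\<forall>n. linf_proj (P n)" and q: "linf_proj_sup P q" and qx: "q x \<noteq> 0"
  shows "\<exists>n. P n x = 1"
proof -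
  define r where "r = (\<lambda>x. if x \<in> {y. \<exists>n. P n y = 1} then 1 else (0::complex))"
  have "linf_proj r" unfolding r_def by (rule ind_linf_proj)
  moreover have "(\<lambda>x. r x * P n x) = P n" for n
  proof
    fix y show "r y * P n y = P n y" using linf_proj_cases[OF P[rule_format, of n], of y] by (auto simp: r_def)
  qed
  ultimately have "(\<lambda>x. r x * q x) = q" using q by (auto simp: linf_proj_sup_def)
  hence "r x * q x = q x" by metis
  thus ?thesis using qx by (auto simp: r_def split: if_splits)
qed

context fam
begin

lemma Cint_lin:
  assumes f: "f \<in> linf" and g: "g \<in> linf"
  shows "Cint \<mu> (\<lambda>x. f x + c * g x) = Cint \<mu> f + c * Cint \<mu> g"
proof -
  have re: "(\<lambda>x. Re (f x + c * g x)) = (\<lambda>x. (Re (f x) + Re c * Re (g x)) + (- Im c) * Im (g x))"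
    by (auto simp: fun_eq_iff)
  have im: "(\<lambda>x. Im (f x + c * g x)) = (\<lambda>x. (Im (f x) + Re c * Im (g x)) + Im c * Re (g x))"
    by (auto simp: fun_eq_iff algebra_simps)
  have r: "Iint \<mu> (\<lambda>x. Re (f x + c * g x)) = Iint \<mu> (\<lambda>x. Re (f x)) + Re c * Iint \<mu> (\<lambda>x. Re (g x)) - Im c * Iint \<mu> (\<lambda>x. Im (g x))"
    unfolding re I_lin[OF bnd_lin[OF bnd_Re[OF f] bnd_Re[OF g]] bnd_Im[OF g]] I_lin[OF bnd_Re[OF f] bnd_Re[OF g]]
    by simp
  have i: "Iint \<mu> (\<lambda>x. Im (f x + c * g x)) = Iint \<mu> (\<lambda>x. Im (f x)) + Re c * Iint \<mu> (\<lambda>x. Im (g x)) + Im c * Iint \<mu> (\<lambda>x. Re (g x))"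
    unfolding im I_lin[OF bnd_lin[OF bnd_Im[OF f] bnd_Im[OF g]] bnd_Re[OF g]] I_lin[OF bnd_Im[OF f] bnd_Im[OF g]]
    by simp
  show ?thesis unfolding Cint_def complex_eq_iff using r i by (simp add: algebra_simps)
qed

lemma Cint_state: "linf_state (Cint \<mu>)"
  unfolding linf_state_def
proof (intro conjI ballI allI impI)
  show "Cint \<mu> (\<lambda>x. f x + c * g x) = Cint \<mu> f + c * Cint \<mu> g" if "f \<in> linf" "g \<in> linf" for f g c
    by (rule Cint_lin[OF that])
  show "cnonneg (Cint \<mu> f)" if "f \<in> linf" "\<forall>x. cnonneg (f x)" for f
  proof -
    have "(\<lambda>x. Im (f x)) = (\<lambda>_. 0)" using that(2) by (auto simp: cnonneg_def)
    hence "Iint \<mu> (\<lambda>x. Im (f x)) = 0" by (simp add: I_const)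
    moreover have "Iint \<mu> (\<lambda>x. Re (f x)) \<ge> 0"
      using that by (intro I_nonneg bnd_Re) (auto simp: cnonneg_def)
    ultimately show ?thesis by (simp add: Cint_def cnonneg_def)
  qed
  show "Cint \<mu> (\<lambda>_. 1) = 1" by (simp add: Cint_def I_const complex_eq_iff)
qed

lemma mu_union_le: "\<mu> (A \<union> B) \<le> \<mu> A + \<mu> B"
proof -
  have "A \<union> B = A \<union> (B - A)" by auto
  hence "\<mu> (A \<union> B) = \<mu> A + \<mu> (B - A)" using mu_add[of A "B - A"] by (metis Diff_disjoint)
  thus ?thesis using mu_mono[of "B - A" B] by auto
qed

lemma mu_finite:
  assumes sing: "\<forall>x. \<mu> {x} = 0" and "finite A" shows "\<mu> A = 0"
  using assms(2)
proof (induction A rule: finite_induct)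
  case empty then show ?case by (simp add: mu_empty)
next
  case (insert x A)
  have "\<mu> (insert x A) \<le> \<mu> {x} + \<mu> A" using mu_union_le[of "{x}" A] by simp
  then show ?case using sing insert.IH mu_nonneg[of "insert x A"] by simp
qed

lemma I_finite_support:
  assumes sing: "\<forall>x. \<mu> {x} = 0" and fin: "finite {x. h x \<noteq> 0}"
  shows "Iint \<mu> h = 0"
proof -
  have "range h \<subseteq> insert 0 (h ` {x. h x \<noteq> 0})" by auto
  moreover have "finite (insert 0 (h ` {x. h x \<noteq> 0}))" using fin by simp
  ultimately have sh: "simple h" unfolding simple_def by (rule finite_subset)
  have "Sint \<mu> h = 0" unfolding Sint_def
  proof (rule sum.neutral, rule ballI)
    fix v assume "v \<in> range h"
    show "v * \<mu> (h -` {v}) = 0"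
    proof (cases "v = 0")
      case False
      hence "h -` {v} \<subseteq> {x. h x \<noteq> 0}" by auto
      hence "finite (h -` {v})" using fin by (rule finite_subset)
      thus ?thesis using mu_finite[OF sing] by simp
    qed simp
  qed
  thus ?thesis using I_simple[OF sh] by simp
qed

lemma Cint_singular:
  assumes sing: "\<forall>x. \<mu> {x} = 0" shows "linf_singular (Cint \<mu>)"
  unfolding linf_singular_def
proof (intro allI impI)
  fix f :: "'a \<Rightarrow> complex" assume fin: "finite {x. f x \<noteq> 0}"
  have "finite {x. Re (f x) \<noteq> 0}" "finite {x. Im (f x) \<noteq> 0}"
    by (rule finite_subset[OF _ fin], auto)+
  thus "Cint \<mu> f = 0" by (simp add: Cint_def I_finite_support[OF sing] complex_eq_iff)
qed

lemma Cint_proj: "linf_proj p \<Longrightarrow> Cint \<mu> p = complex_of_real (\<mu> {y. p y = 1})"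
proof -
  assume p: "linf_proj p"
  have e1: "(\<lambda>x. Re (p x)) = (\<lambda>x. if x \<in> {y. p y = 1} then 1 else 0)"
    using linf_proj_cases[OF p] by (force simp: fun_eq_iff)
  have e2: "(\<lambda>x. Im (p x)) = (\<lambda>_. 0)"
  proof (rule ext)
    fix x show "Im (p x) = 0" using linf_proj_cases[OF p, of x] by auto
  qed
  have "Cint \<mu> p = Complex (Iint \<mu> (\<lambda>x. if x \<in> {y. p y = 1} then 1 else 0)) (Iint \<mu> (\<lambda>_. 0))"
    unfolding Cint_def e1 e2 ..
  also have "\<dots> = Complex (\<mu> {y. p y = 1}) 0" unfolding I_ind I_const ..
  finally show ?thesis by (simp add: complex_eq_iff)
qed

lemma Cint_regular:
  assumes reg: "regular_measure \<mu>" shows "linf_regular (Cint \<mu>)"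
  unfolding linf_regular_def
proof (intro allI impI)
  fix P :: "nat \<Rightarrow> 'a \<Rightarrow> complex" and q
  assume a: "(\<forall>n. linf_proj (P n) \<and> Cint \<mu> (P n) = 0) \<and> linf_proj_sup P q"
  have P: "\<forall>n. linf_proj (P n)" using a by blast
  have q: "linf_proj q" using a by (simp add: linf_proj_sup_def)
  have "\<mu> {y. P n y = 1} = 0" for n using a Cint_proj[of "P n"] by auto
  hence U: "\<mu> (\<Union>n. {y. P n y = 1}) = 0" using reg by (simp add: regular_measure_def)
  have "{y. q y = 1} \<subseteq> (\<Union>n. {y. P n y = 1})"
    using linf_sup_sub[OF P] a by fastforce
  hence "\<mu> {y. q y = 1} \<le> 0" using mu_mono U by metis
  hence "\<mu> {y. q y = 1} = 0" using mu_nonneg by (meson antisym)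
  thus "Cint \<mu> q = 0" using Cint_proj[OF q] by simp
qed

end

lemma i_to_ii:
  fixes \<mu> :: "'a set \<Rightarrow> real"
  assumes "fa_prob_measure \<mu>" "regular_measure \<mu>" "\<forall>x. \<mu> {x} = 0"
  shows "\<exists>\<phi> :: ('a \<Rightarrow> complex) \<Rightarrow> complex. linf_state \<phi> \<and> linf_regular \<phi> \<and> linf_singular \<phi>"
proof -
  interpret fam \<mu> by (rule fam.intro[OF assms(1)])
  show ?thesis using Cint_state Cint_regular[OF assms(2)] Cint_singular[OF assms(3)] by blast
qed

definition indc :: "'a set \<Rightarrow> 'a \<Rightarrow> complex" where
  "indc A = (\<lambda>x. if x \<in> A then 1 else 0)"

lemma indc_linf: "indc A \<in> linf"
  unfolding linf_iff indc_def by (auto intro: exI[of _ 1])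

lemma state_real_nonneg:
  assumes "linf_state \<phi>" "f \<in> linf" "\<forall>x. cnonneg (f x)"
  shows "Im (\<phi> f) = 0" "Re (\<phi> f) \<ge> 0"
  using assms by (auto simp: linf_state_def cnonneg_def)

lemma ii_to_i:
  fixes \<phi> :: "('a \<Rightarrow> complex) \<Rightarrow> complex"
  assumes st: "linf_state \<phi>" and reg: "linf_regular \<phi>" and sg: "linf_singular \<phi>"
  shows "\<exists>\<mu> :: 'a set \<Rightarrow> real. fa_prob_measure \<mu> \<and> regular_measure \<mu> \<and> (\<forall>x. \<mu> {x} = 0)"
proof -
  define \<mu> where "\<mu> A = Re (\<phi> (indc A))" for A
  have nn: "\<forall>x. cnonneg (indc A x)" for A by (simp add: indc_def cnonneg_def)
  have fa: "fa_prob_measure \<mu>"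
    unfolding fa_prob_measure_def
  proof (intro conjI allI impI)
    show "0 \<le> \<mu> A" for A unfolding \<mu>_def by (rule state_real_nonneg(2)[OF st indc_linf nn])
    have "indc (UNIV::'a set) = (\<lambda>_. 1)" by (simp add: indc_def)
    thus "\<mu> UNIV = 1" using st by (simp add: \<mu>_def linf_state_def)
    fix A B :: "'a set" assume d: "A \<inter> B = {}"
    have "indc (A \<union> B) = (\<lambda>x. indc A x + 1 * indc B x)" using d by (auto simp: indc_def fun_eq_iff)
    moreover have "\<phi> (\<lambda>x. indc A x + 1 * indc B x) = \<phi> (indc A) + 1 * \<phi> (indc B)"
      using st indc_linf unfolding linf_state_def by blast
    ultimately have "\<phi> (indc (A \<union> B)) = \<phi> (indc A) + 1 * \<phi> (indc B)" by simp
    thus "\<mu> (A \<union> B) = \<mu> A + \<mu> B" by (simp add: \<mu>_def)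
  qed
  have zero: "\<phi> (indc A) = 0" if "\<mu> A = 0" for A
    using that state_real_nonneg[OF st indc_linf nn, of A] by (simp add: \<mu>_def complex_eq_iff)
  have regm: "regular_measure \<mu>"
    unfolding regular_measure_def
  proof (intro allI impI)
    fix A :: "nat \<Rightarrow> 'a set" assume A: "\<forall>n. \<mu> (A n) = 0"
    have pr: "linf_proj (indc B)" for B unfolding indc_def by (rule ind_linf_proj)
    have sup: "linf_proj_sup (\<lambda>n. indc (A n)) (indc (\<Union>n. A n))"
      unfolding linf_proj_sup_def
    proof (intro conjI allI impI)
      show "linf_proj (indc (\<Union>n. A n))" by (rule pr)
      show "(\<lambda>x. indc (\<Union>n. A n) x * indc (A n) x) = indc (A n)" for n
        by (auto simp: indc_def fun_eq_iff)
      fix r assume r: "linf_proj r \<and> (\<forall>n. (\<lambda>x. r x * indc (A n) x) = indc (A n))"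
      show "(\<lambda>x. r x * indc (\<Union>n. A n) x) = indc (\<Union>n. A n)"
      proof
        fix x show "r x * indc (\<Union>n. A n) x = indc (\<Union>n. A n) x"
        proof (cases "x \<in> (\<Union>n. A n)")
          case True
          then obtain n where "x \<in> A n" by auto
          hence "r x * 1 = 1" using r fun_cong[of "\<lambda>x. r x * indc (A n) x" "indc (A n)" x]
            by (auto simp: indc_def)
          thus ?thesis using True by (simp add: indc_def)
        qed (simp add: indc_def)
      qed
    qed
    have "\<forall>n. linf_proj (indc (A n)) \<and> \<phi> (indc (A n)) = 0" using pr zero A by blast
    moreover note reg[unfolded linf_regular_def, rule_format, of "\<lambda>n. indc (A n)" "indc (\<Union>n. A n)"]
    ultimately have "\<phi> (indc (\<Union>n. A n)) = 0" using sup by blast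
    thus "\<mu> (\<Union>n. A n) = 0" by (simp add: \<mu>_def)
  qed
  have "\<mu> {x} = 0" for x
  proof -
    have "finite {y. indc {x} y \<noteq> 0}" by (simp add: indc_def)
    thus ?thesis using sg by (simp add: linf_singular_def \<mu>_def)
  qed
  thus ?thesis using fa regm by blast
qed



lemma bnd_linf: "bnd g \<Longrightarrow> (\<lambda>x. complex_of_real (g x)) \<in> linf"
  unfolding bnd_def linf_iff by auto

lemma const_linf: "(\<lambda>_. c) \<in> linf"
  unfolding linf_iff by auto

lemma ind_bnd: "bnd (\<lambda>x. if x \<in> A then (1::real) else 0)"
  unfolding bnd_def by (rule exI[of _ 1]) auto

locale lstate =
  fixes \<phi> :: "('a \<Rightarrow> complex) \<Rightarrow> complex"
  assumes st: "linf_state \<phi>"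
begin

lemma lin: "f \<in> linf \<Longrightarrow> g \<in> linf \<Longrightarrow> \<phi> (\<lambda>x. f x + c * g x) = \<phi> f + c * \<phi> g"
  using st by (simp add: linf_state_def)

lemma pos: "f \<in> linf \<Longrightarrow> \<forall>x. cnonneg (f x) \<Longrightarrow> cnonneg (\<phi> f)"
  using st by (simp add: linf_state_def)

lemma one: "\<phi> (\<lambda>_. 1) = 1"
  using st by (simp add: linf_state_def)

lemma zero: "\<phi> (\<lambda>_. 0) = 0"
proof -
  have "\<phi> (\<lambda>x. (\<lambda>_. 0) x + 1 * (\<lambda>_. 0) x) = \<phi> (\<lambda>_. 0) + 1 * \<phi> (\<lambda>_. 0)"
    by (rule lin[OF const_linf const_linf])
  thus ?thesis by simp
qed

lemma scal: "f \<in> linf \<Longrightarrow> \<phi> (\<lambda>x. c * f x) = c * \<phi> f"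
proof -
  assume f: "f \<in> linf"
  have "\<phi> (\<lambda>x. (\<lambda>_. 0) x + c * f x) = \<phi> (\<lambda>_. 0) + c * \<phi> f"
    by (rule lin[OF const_linf f])
  thus ?thesis by (simp add: zero)
qed

lemma const: "\<phi> (\<lambda>_. c) = c"
proof -
  have "\<phi> (\<lambda>x. c * (\<lambda>_. 1) x) = c * \<phi> (\<lambda>_. 1)" by (rule scal[OF const_linf])
  thus ?thesis by (simp add: one)
qed

lemma Phi_real: assumes g: "bnd g" shows "Im (\<phi> (\<lambda>x. complex_of_real (g x))) = 0"
proof -
  obtain B where B: "\<forall>x. \<bar>g x\<bar> \<le> B" using g by (auto simp: bnd_def)
  have gb: "bnd (\<lambda>x. g x + B * 1)" by (rule bnd_lin[OF g]) (auto simp: bnd_def)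
  have "cnonneg (\<phi> (\<lambda>x. complex_of_real (g x + B * 1)))"
  proof (rule pos[OF bnd_linf[OF gb]], rule allI)
    fix x show "cnonneg (complex_of_real (g x + B * 1))"
      using B[rule_format, of x] by (simp add: cnonneg_def abs_le_iff)
  qed
  moreover have "(\<lambda>x. complex_of_real (g x + B * 1)) = (\<lambda>x. complex_of_real (g x) + complex_of_real B * (\<lambda>_. 1) x)"
    by simp
  moreover have "\<phi> (\<lambda>x. complex_of_real (g x) + complex_of_real B * (\<lambda>_. 1) x) = \<phi> (\<lambda>x. complex_of_real (g x)) + complex_of_real B * \<phi> (\<lambda>_. 1)"
    by (rule lin[OF bnd_linf[OF g] const_linf])
  ultimately have "cnonneg (\<phi> (\<lambda>x. complex_of_real (g x)) + complex_of_real B)" by (simp add: one)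
  thus ?thesis by (simp add: cnonneg_def)
qed

lemma Phi_mono:
  assumes g: "bnd g" and k: "bnd k" and le: "\<And>x. g x \<le> k x"
  shows "Re (\<phi> (\<lambda>x. complex_of_real (g x))) \<le> Re (\<phi> (\<lambda>x. complex_of_real (k x)))"
proof -
  have kg: "bnd (\<lambda>x. k x + (-1) * g x)" by (rule bnd_lin[OF k g])
  have "cnonneg (\<phi> (\<lambda>x. complex_of_real (k x + (-1) * g x)))"
  proof (rule pos[OF bnd_linf[OF kg]], rule allI)
    fix x show "cnonneg (complex_of_real (k x + (-1) * g x))" using le[of x] by (simp add: cnonneg_def)
  qed
  moreover have "(\<lambda>x. complex_of_real (k x + (-1) * g x)) = (\<lambda>x. complex_of_real (k x) + (-1) * complex_of_real (g x))"
    by simp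
  moreover have "\<phi> (\<lambda>x. complex_of_real (k x) + (-1) * complex_of_real (g x)) = \<phi> (\<lambda>x. complex_of_real (k x)) + (-1) * \<phi> (\<lambda>x. complex_of_real (g x))"
    by (rule lin[OF bnd_linf[OF k] bnd_linf[OF g]])
  ultimately show ?thesis by (simp add: cnonneg_def)
qed

lemma Phi_const: "\<phi> (\<lambda>x. complex_of_real ((\<lambda>_. e) x)) = complex_of_real e"
  by (simp add: const)

lemma Phi_abs:
  assumes g: "bnd g" and le: "\<And>x. \<bar>g x\<bar> \<le> e"
  shows "\<bar>Re (\<phi> (\<lambda>x. complex_of_real (g x)))\<bar> \<le> e"
proof -
  have c: "bnd (\<lambda>_. c)" for c :: real by (auto simp: bnd_def)
  have "Re (\<phi> (\<lambda>x. complex_of_real (g x))) \<le> Re (\<phi> (\<lambda>x. complex_of_real ((\<lambda>_. e) x)))"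
    by (rule Phi_mono[OF g c]) (simp add: abs_le_D1[OF le])
  moreover have "Re (\<phi> (\<lambda>x. complex_of_real ((\<lambda>_. -e) x))) \<le> Re (\<phi> (\<lambda>x. complex_of_real (g x)))"
    by (rule Phi_mono[OF c g]) (metis abs_le_D2 le minus_le_iff)
  ultimately show ?thesis unfolding Phi_const by simp
qed

lemma decomp:
  assumes h: "h \<in> linf"
  shows "\<phi> h = \<phi> (\<lambda>x. complex_of_real (Re (h x))) + \<i> * \<phi> (\<lambda>x. complex_of_real (Im (h x)))"
proof -
  have "h = (\<lambda>x. complex_of_real (Re (h x)) + \<i> * complex_of_real (Im (h x)))"
    by (rule ext) (simp add: complex_eq_iff)
  moreover have "\<phi> (\<lambda>x. complex_of_real (Re (h x)) + \<i> * complex_of_real (Im (h x))) =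
      \<phi> (\<lambda>x. complex_of_real (Re (h x))) + \<i> * \<phi> (\<lambda>x. complex_of_real (Im (h x)))"
    by (rule lin[OF bnd_linf[OF bnd_Re[OF h]] bnd_linf[OF bnd_Im[OF h]]])
  ultimately show ?thesis by metis
qed

lemma real_cmod: "Im z = 0 \<Longrightarrow> cmod z = \<bar>Re z\<bar>"
  by (simp add: cmod_def)

lemma norm_bound:
  assumes h: "h \<in> linf" and le: "\<And>x. cmod (h x) \<le> e"
  shows "cmod (\<phi> h) \<le> 2 * e"
proof -
  define a b where "a = \<phi> (\<lambda>x. complex_of_real (Re (h x)))" and "b = \<phi> (\<lambda>x. complex_of_real (Im (h x)))"
  have a: "cmod a \<le> e" unfolding a_def
    using real_cmod[OF Phi_real[OF bnd_Re[OF h]]] Phi_abs[OF bnd_Re[OF h], of e] le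
    by (metis abs_Re_le_cmod order_trans)
  have b: "cmod b \<le> e" unfolding b_def
    using real_cmod[OF Phi_real[OF bnd_Im[OF h]]] Phi_abs[OF bnd_Im[OF h], of e] le
    by (metis abs_Im_le_cmod order_trans)
  have "cmod (\<phi> h) = cmod (a + \<i> * b)" using decomp[OF h] by (simp add: a_def b_def)
  also have "\<dots> \<le> cmod a + cmod (\<i> * b)" by (rule norm_triangle_ineq)
  also have "\<dots> \<le> 2 * e" using a b by (simp add: norm_mult)
  finally show ?thesis .
qed

lemma null_real:
  assumes g: "bnd g" and N: "\<And>x. x \<notin> N \<Longrightarrow> g x = 0" and z: "\<phi> (indc N) = 0"
  shows "\<phi> (\<lambda>x. complex_of_real (g x)) = 0"
proof -
  obtain K where K: "\<forall>x. \<bar>g x\<bar> \<le> K" using g by (auto simp: bnd_def)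
  define ind where "ind = (\<lambda>x. if x \<in> N then (1::real) else 0)"
  have ib: "bnd (\<lambda>x. (\<lambda>_. 0) x + K * ind x)" "bnd (\<lambda>x. (\<lambda>_. 0) x + (-K) * ind x)"
    using ind_bnd[of N] by (auto intro!: bnd_lin simp: ind_def bnd_def)
  have pk: "\<phi> (\<lambda>x. complex_of_real ((\<lambda>_. 0) x + c * ind x)) = 0" for c
  proof -
    have "(\<lambda>x. complex_of_real ((\<lambda>_. 0) x + c * ind x)) = (\<lambda>x. complex_of_real c * indc N x)"
      by (auto simp: ind_def indc_def fun_eq_iff)
    thus ?thesis using scal[OF indc_linf, of "complex_of_real c" N] z by simp
  qed
  have "Re (\<phi> (\<lambda>x. complex_of_real (g x))) \<le> Re (\<phi> (\<lambda>x. complex_of_real ((\<lambda>_. 0) x + K * ind x)))"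
    by (rule Phi_mono[OF g ib(1)]) (use K N in \<open>force simp: ind_def abs_le_iff\<close>)
  moreover have "Re (\<phi> (\<lambda>x. complex_of_real ((\<lambda>_. 0) x + (-K) * ind x))) \<le> Re (\<phi> (\<lambda>x. complex_of_real (g x)))"
  proof (rule Phi_mono[OF ib(2) g])
    fix x show "(\<lambda>_. 0) x + (-K) * ind x \<le> g x"
      using K[rule_format, of x] N[of x] by (cases "x \<in> N") (auto simp: ind_def abs_le_iff)
  qed
  ultimately have "Re (\<phi> (\<lambda>x. complex_of_real (g x))) = 0" unfolding pk by simp
  thus ?thesis using Phi_real[OF g] by (simp add: complex_eq_iff)
qed

lemma null:
  assumes h: "h \<in> linf" and N: "\<And>x. x \<notin> N \<Longrightarrow> h x = 0" and z: "\<phi> (indc N) = 0"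
  shows "\<phi> h = 0"
  using decomp[OF h] null_real[OF bnd_Re[OF h] _ z] null_real[OF bnd_Im[OF h] _ z] N by simp

end



definition diag :: "(('a \<Rightarrow> complex) \<Rightarrow> ('a \<Rightarrow> complex)) \<Rightarrow> 'a \<Rightarrow> complex" where
  "diag T = (\<lambda>x. T (evec x) x)"

lemma diag_linf: "T \<in> bop \<Longrightarrow> diag T \<in> linf"
  using bop_diag_bounded by (auto simp: linf_iff diag_def)

lemma diag_add: "diag (bop_add_scaled S c T) = (\<lambda>x. diag S x + c * diag T x)"
  by (simp add: diag_def bop_add_scaled_def)

lemma diag_id: "diag bop_id = (\<lambda>_. 1)"
  by (simp add: diag_def bop_id_def) (simp add: evec_def)

lemma linf_mono: "f \<in> linf \<Longrightarrow> (\<And>x. cmod (g x) \<le> cmod (f x)) \<Longrightarrow> g \<in> linf"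
  unfolding linf_iff by (meson order_trans)

lemma bop_zero: assumes "T \<in> bop" shows "T (\<lambda>_. 0) = (\<lambda>_. 0)"
proof -
  have "\<forall>f\<in>ell2. \<forall>g\<in>ell2. \<forall>c. T (\<lambda>x. f x + c * g x) = (\<lambda>x. T f x + c * T g x)"
    using assms by (simp add: bop_def)
  from this[rule_format, OF ell2_zero ell2_zero, of 1]
  have "T (\<lambda>x. (\<lambda>_. 0) x + 1 * (\<lambda>_. 0) x) = (\<lambda>x. T (\<lambda>_. 0) x + 1 * T (\<lambda>_. 0) x)" .
  thus ?thesis by (simp add: fun_eq_iff)
qed

lemma proj_bop: "bop_proj P \<Longrightarrow> P \<in> bop" by (simp add: bop_proj_def)

lemma proj_idem: "bop_proj P \<Longrightarrow> P (P f) = P f"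
  by (simp add: bop_proj_def) (metis comp_apply)

lemma proj_adj: "bop_proj P \<Longrightarrow> f \<in> ell2 \<Longrightarrow> g \<in> ell2 \<Longrightarrow> ell2_inner (P f) g = ell2_inner f (P g)"
  by (simp add: bop_proj_def)

lemma proj_diag: assumes P: "bop_proj P"
  shows "diag P x = complex_of_real ((ell2_norm (P (evec x)))\<^sup>2)"
proof -
  have Pe: "P (evec x) \<in> ell2" using bop_ell2[OF proj_bop[OF P] evec_ell2] .
  have "diag P x = ell2_inner (evec x) (P (evec x))" by (simp add: diag_def inner_evec_left)
  also have "\<dots> = ell2_inner (evec x) (P (P (evec x)))" by (simp add: proj_idem[OF P])
  also have "\<dots> = ell2_inner (P (evec x)) (P (evec x))" by (simp add: proj_adj[OF P evec_ell2 Pe])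
  also have "\<dots> = complex_of_real ((ell2_norm (P (evec x)))\<^sup>2)" by (rule inner_self[OF Pe])
  finally show ?thesis .
qed

lemma indc_sup: "linf_proj_sup (\<lambda>n. indc (A n)) (indc (\<Union>n. A n))"
  unfolding linf_proj_sup_def
proof (intro conjI allI impI)
  show "linf_proj (indc (\<Union>n. A n))" unfolding indc_def by (rule ind_linf_proj)
  show "(\<lambda>x. indc (\<Union>n. A n) x * indc (A n) x) = indc (A n)" for n
    by (auto simp: indc_def fun_eq_iff)
  fix r assume r: "linf_proj r \<and> (\<forall>n. (\<lambda>x. r x * indc (A n) x) = indc (A n))"
  show "(\<lambda>x. r x * indc (\<Union>n. A n) x) = indc (\<Union>n. A n)"
  proof
    fix x show "r x * indc (\<Union>n. A n) x = indc (\<Union>n. A n) x"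
    proof (cases "x \<in> (\<Union>n. A n)")
      case True
      then obtain n where "x \<in> A n" by auto
      hence "r x * 1 = 1" using r fun_cong[of "\<lambda>x. r x * indc (A n) x" "indc (A n)" x]
        by (auto simp: indc_def)
      thus ?thesis using True by (simp add: indc_def)
    qed (simp add: indc_def)
  qed
qed

lemma indc_proj: "linf_proj (indc X)"
  unfolding indc_def by (rule ind_linf_proj)

context lstate
begin

lemma psi_state: "bop_state (\<lambda>T. \<phi> (diag T))"
  unfolding bop_state_def
proof (intro conjI ballI allI impI)
  show "\<phi> (diag (bop_add_scaled S c T)) = \<phi> (diag S) + c * \<phi> (diag T)" if "S \<in> bop" "T \<in> bop" for S T c
    unfolding diag_add by (rule lin[OF diag_linf[OF that(1)] diag_linf[OF that(2)]])
  show "cnonneg (\<phi> (diag T))" if "bop_positive T" for T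
  proof (rule pos)
    show "diag T \<in> linf" using that by (intro diag_linf) (simp add: bop_positive_def)
    show "\<forall>x. cnonneg (diag T x)"
    proof
      fix x
      have "diag T x = ell2_inner (evec x) (T (evec x))" by (simp add: diag_def inner_evec_left)
      thus "cnonneg (diag T x)" using that evec_ell2[of x] by (simp add: bop_positive_def)
    qed
  qed
  show "\<phi> (diag bop_id) = 1" by (simp add: diag_id one)
qed

lemma psi_singular:
  assumes sg: "linf_singular \<phi>" shows "bop_singular (\<lambda>T. \<phi> (diag T))"
  unfolding bop_singular_def
proof (intro allI impI)
  fix T :: "('a \<Rightarrow> complex) \<Rightarrow> ('a \<Rightarrow> complex)" assume T: "bop_compact T"
  have Tb: "T \<in> bop" using T by (simp add: bop_compact_def)
  define d where "d = diag T"
  have dl: "d \<in> linf" using diag_linf[OF Tb] by (simp add: d_def)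
  have small: "cmod (\<phi> d) \<le> 2 * e" if e: "e > 0" for e
  proof -
    define F where "F = {x. e \<le> cmod (d x)}"
    have fF: "finite F" unfolding F_def d_def diag_def by (rule compact_diag_finite[OF T e])
    define d1 d2 where "d1 = (\<lambda>x. if x \<in> F then d x else 0)" and "d2 = (\<lambda>x. if x \<in> F then 0 else d x)"
    have l1: "d1 \<in> linf" by (rule linf_mono[OF dl]) (simp add: d1_def)
    have l2: "d2 \<in> linf" by (rule linf_mono[OF dl]) (simp add: d2_def)
    have "\<phi> d1 = 0" using sg fF unfolding linf_singular_def
      by (metis (mono_tags, lifting) d1_def finite_subset mem_Collect_eq subsetI)
    moreover have "d = (\<lambda>x. d1 x + 1 * d2 x)" by (auto simp: d1_def d2_def)
    ultimately have "\<phi> d = \<phi> d2" using lin[OF l1 l2, of 1] by simp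
    moreover have "cmod (\<phi> d2) \<le> 2 * e"
      by (rule norm_bound[OF l2]) (use e in \<open>auto simp: d2_def F_def\<close>)
    ultimately show ?thesis by simp
  qed
  have "cmod (\<phi> d) = 0"
  proof (rule ccontr)
    assume "cmod (\<phi> d) \<noteq> 0"
    hence p: "cmod (\<phi> d) > 0" by simp
    have "cmod (\<phi> d) \<le> 2 * (cmod (\<phi> d) / 4)" by (rule small) (use p in simp)
    thus False using p by simp
  qed
  thus "\<phi> (diag T) = 0" by (simp add: d_def)
qed

lemma psi_regular:
  assumes reg: "linf_regular \<phi>" shows "bop_regular (\<lambda>T. \<phi> (diag T))"
  unfolding bop_regular_def
proof (intro allI impI)
  fix P :: "nat \<Rightarrow> ('a \<Rightarrow> complex) \<Rightarrow> ('a \<Rightarrow> complex)" and Q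
  assume a: "(\<forall>n. bop_proj (P n) \<and> \<phi> (diag (P n)) = 0) \<and> bop_proj_sup P Q"
  have P: "bop_proj (P n)" for n using a by blast
  have Pz: "\<phi> (diag (P n)) = 0" for n using a by blast
  have sup: "bop_proj_sup P Q" using a by blast
  have Q: "bop_proj Q" using sup by (simp add: bop_proj_sup_def)
  define r where "r n x = (ell2_norm (P n (evec x)))\<^sup>2" for n x
  have dr: "diag (P n) = (\<lambda>x. complex_of_real (r n x))" for n
    using proj_diag[OF P] by (auto simp: r_def)
  have rb: "bnd (r n)" for n
  proof -
    obtain K where K: "\<forall>x. cmod (diag (P n) x) \<le> K"
      using diag_linf[OF proj_bop[OF P]] by (auto simp: linf_iff)
    have "\<bar>r n x\<bar> \<le> K" for x using K[rule_format, of x] by (simp add: dr)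
    thus ?thesis by (auto simp: bnd_def)
  qed
  have rnn: "r n x \<ge> 0" for n x by (simp add: r_def)
  define B where "B n k = {x. inverse (real (Suc k)) \<le> r n x}" for n k
  have Bz: "\<phi> (indc (B n k)) = 0" for n k
  proof -
    define ind where "ind = (\<lambda>x. if x \<in> B n k then (1::real) else 0)"
    have ib: "bnd ind" unfolding ind_def by (rule ind_bnd)
    have ie: "(\<lambda>x. complex_of_real (ind x)) = indc (B n k)" by (auto simp: ind_def indc_def fun_eq_iff)
    have b2: "bnd (\<lambda>x. (\<lambda>_. 0) x + real (Suc k) * r n x)" by (intro bnd_lin rb) (auto simp: bnd_def)
    have "Re (\<phi> (\<lambda>x. complex_of_real (ind x))) \<le> Re (\<phi> (\<lambda>x. complex_of_real ((\<lambda>_. 0) x + real (Suc k) * r n x)))"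
    proof (rule Phi_mono[OF ib b2])
      fix x show "ind x \<le> (\<lambda>_. 0) x + real (Suc k) * r n x"
      proof (cases "x \<in> B n k")
        case True
        hence "inverse (real (Suc k)) \<le> r n x" by (simp add: B_def)
        hence "real (Suc k) * inverse (real (Suc k)) \<le> real (Suc k) * r n x" by (rule mult_left_mono) simp
        thus ?thesis using True by (simp add: ind_def)
      next
        case False thus ?thesis using rnn[of n x] by (simp add: ind_def)
      qed
    qed
    moreover have "\<phi> (\<lambda>x. complex_of_real ((\<lambda>_. 0) x + real (Suc k) * r n x)) = 0"
    proof -
      have "(\<lambda>x. complex_of_real ((\<lambda>_. 0) x + real (Suc k) * r n x)) = (\<lambda>x. complex_of_real (real (Suc k)) * diag (P n) x)"
        by (simp add: dr)
      thus ?thesis using scal[OF diag_linf[OF proj_bop[OF P]], of "complex_of_real (real (Suc k))" n] Pz by simp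
    qed
    moreover have "cnonneg (\<phi> (\<lambda>x. complex_of_real (ind x)))"
      by (rule pos[OF bnd_linf[OF ib]]) (simp add: ind_def cnonneg_def)
    moreover have "Im (\<phi> (\<lambda>x. complex_of_real (ind x))) = 0" by (rule Phi_real[OF ib])
    ultimately have "\<phi> (\<lambda>x. complex_of_real (ind x)) = 0" by (simp add: complex_eq_iff cnonneg_def)
    thus ?thesis using ie by simp
  qed
  define C where "C m = B (fst (prod_decode m)) (snd (prod_decode m))" for m
  define N where "N = (\<Union>m. C m)"
  have Nz: "\<phi> (indc N) = 0"
  proof -
    have "\<forall>m. linf_proj (indc (C m)) \<and> \<phi> (indc (C m)) = 0" using Bz by (simp add: C_def indc_proj)
    moreover note reg[unfolded linf_regular_def, rule_format, of "\<lambda>m. indc (C m)" "indc (\<Union>m. C m)"]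
    ultimately show ?thesis using indc_sup[of C] by (simp add: N_def)
  qed
  have zeroP: "P n (evec y) = (\<lambda>_. 0)" if y: "y \<notin> N" for n y
  proof -
    have lt: "r n y < inverse (real (Suc k))" for k
    proof -
      have "y \<notin> C (prod_encode (n, k))" using y by (simp add: N_def)
      thus ?thesis by (simp add: C_def B_def)
    qed
    have "r n y = 0"
    proof (rule ccontr)
      assume "r n y \<noteq> 0"
      hence "r n y > 0" using rnn[of n y] by simp
      then obtain k where "inverse (real (Suc k)) < r n y" using reals_Archimedean by blast
      thus False using lt[of k] by simp
    qed
    hence "ell2_norm (P n (evec y)) = 0" by (simp add: r_def)
    thus ?thesis by (rule ell2_norm_zero[OF bop_ell2[OF proj_bop[OF P] evec_ell2]])
  qed
  have dQ: "diag Q y = 0" if y: "y \<notin> N" for y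
  proof -
    define R where "R = Mop (indc (-{y}))"
    have Rp: "bop_proj R" unfolding R_def by (rule Mop_proj[OF indc_proj])
    have RP: "R \<circ> P n = P n" for n
    proof
      fix g show "(R \<circ> P n) g = P n g"
      proof (cases "g \<in> ell2")
        case True
        have Pg: "P n g \<in> ell2" by (rule bop_ell2[OF proj_bop[OF P] True])
        have "P n g y = ell2_inner (evec y) (P n g)" by (simp add: inner_evec_left)
        also have "\<dots> = ell2_inner (P n (evec y)) g" by (simp add: proj_adj[OF P evec_ell2 True])
        also have "\<dots> = 0" by (simp add: zeroP[OF y] ell2_inner_def)
        finally have "P n g y = 0" .
        thus ?thesis using Pg by (auto simp: R_def Mop_def indc_def fun_eq_iff)
      next
        case False
        hence "P n g = (\<lambda>_. 0)" using proj_bop[OF P] by (simp add: bop_def)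
        thus ?thesis by (simp add: R_def Mop_def)
      qed
    qed
    have "R \<circ> Q = Q" using sup Rp RP unfolding bop_proj_sup_def by blast
    hence "R (Q (evec y)) = Q (evec y)" by (metis comp_apply)
    moreover have "Q (evec y) \<in> ell2" by (rule bop_ell2[OF proj_bop[OF Q] evec_ell2])
    ultimately have "Q (evec y) y = indc (-{y}) y * Q (evec y) y"
      unfolding R_def Mop_def by (metis (mono_tags, lifting))
    thus ?thesis by (simp add: diag_def indc_def)
  qed
  show "\<phi> (diag Q) = 0" by (rule null[OF diag_linf[OF proj_bop[OF Q]] dQ Nz])
qed

end

lemma ii_to_iii:
  fixes \<phi> :: "('a \<Rightarrow> complex) \<Rightarrow> complex"
  assumes "linf_state \<phi>" "linf_regular \<phi>" "linf_singular \<phi>"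
  shows "\<exists>\<psi> :: (('a \<Rightarrow> complex) \<Rightarrow> ('a \<Rightarrow> complex)) \<Rightarrow> complex. bop_state \<psi> \<and> bop_regular \<psi> \<and> bop_singular \<psi>"
proof -
  interpret lstate \<phi> by (rule lstate.intro[OF assms(1)])
  show ?thesis using psi_state psi_regular[OF assms(2)] psi_singular[OF assms(3)] by blast
qed



lemma fin_supp_linf: "finite {x. f x \<noteq> 0} \<Longrightarrow> f \<in> linf"
proof -
  assume fin: "finite {x. f x \<noteq> 0}"
  define B where "B = Max (insert 0 (cmod ` f ` {x. f x \<noteq> 0}))"
  have "cmod (f x) \<le> B" for x
  proof (cases "f x = 0")
    case False
    thus ?thesis unfolding B_def using fin by (intro Max_ge) auto
  next
    case True
    thus ?thesis unfolding B_def using fin by (intro Max_ge) auto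
  qed
  thus ?thesis by (auto simp: linf_iff)
qed

lemma eq_sum_le:
  fixes h k :: "'a \<Rightarrow> real"
  assumes sh: "h summable_on UNIV" and sk: "k summable_on UNIV" and k0: "\<And>x. 0 \<le> k x"
    and le: "\<And>x. k x \<le> h x" and eq: "infsum h UNIV = infsum k UNIV"
  shows "h x = k x"
proof -
  have sd: "(\<lambda>x. h x - k x) summable_on UNIV"
    by (rule summable_on_comparison_test[OF sh]) (use k0 le in auto)
  have "infsum (\<lambda>x. k x + (h x - k x)) UNIV = infsum k UNIV + infsum (\<lambda>x. h x - k x) UNIV"
    by (rule infsum_add[OF sk sd])
  hence "infsum (\<lambda>x. h x - k x) UNIV \<le> 0" using eq by simp
  hence "h x - k x = 0" by (rule nonneg_infsum_le_0D[OF _ sd]) (use le in auto)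
  thus ?thesis by simp
qed

locale bstate =
  fixes \<psi> :: "(('a \<Rightarrow> complex) \<Rightarrow> ('a \<Rightarrow> complex)) \<Rightarrow> complex"
  assumes st: "bop_state \<psi>"
begin

lemma blin: "S \<in> bop \<Longrightarrow> T \<in> bop \<Longrightarrow> \<psi> (bop_add_scaled S c T) = \<psi> S + c * \<psi> T"
  using st by (simp add: bop_state_def)

lemma Mlin: "f \<in> linf \<Longrightarrow> g \<in> linf \<Longrightarrow> \<psi> (Mop (\<lambda>x. f x + c * g x)) = \<psi> (Mop f) + c * \<psi> (Mop g)"
  unfolding Mop_lin by (intro blin Mop_bop)

lemma phi_state: "linf_state (\<lambda>f. \<psi> (Mop f))"
  unfolding linf_state_def
proof (intro conjI ballI allI impI)
  show "\<psi> (Mop (\<lambda>x. f x + c * g x)) = \<psi> (Mop f) + c * \<psi> (Mop g)" if "f \<in> linf" "g \<in> linf" for f g c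
    by (rule Mlin[OF that])
  show "cnonneg (\<psi> (Mop f))" if "f \<in> linf" "\<forall>x. cnonneg (f x)" for f
    using st Mop_positive[OF that(1)] that(2) by (simp add: bop_state_def)
  show "\<psi> (Mop (\<lambda>_. 1)) = 1" using st by (simp add: Mop_one bop_state_def)
qed

lemma Mzero: "\<psi> (Mop (\<lambda>_. 0)) = 0"
  using Mlin[OF const_linf const_linf, of 0 1 0] by simp

lemma phi_singular: assumes sg: "bop_singular \<psi>" shows "linf_singular (\<lambda>f. \<psi> (Mop f))"
  unfolding linf_singular_def
proof (intro allI impI)
  have main: "\<forall>f. {x. f x \<noteq> 0} \<subseteq> S \<longrightarrow> \<psi> (Mop f) = 0" if "finite S" for S :: "'a set"
    using that
  proof (induction S rule: finite_induct)
    case empty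
    show ?case
    proof (intro allI impI)
      fix f :: "'a \<Rightarrow> complex" assume "{x. f x \<noteq> 0} \<subseteq> {}"
      hence "f = (\<lambda>_. 0)" by auto
      thus "\<psi> (Mop f) = 0" by (simp add: Mzero)
    qed
  next
    case (insert a S)
    show ?case
    proof (intro allI impI)
      fix f :: "'a \<Rightarrow> complex" assume f: "{x. f x \<noteq> 0} \<subseteq> insert a S"
      define g where "g = (\<lambda>x. if x = a then 0 else f x)"
      have gS: "{x. g x \<noteq> 0} \<subseteq> S" using f by (auto simp: g_def)
      hence gl: "g \<in> linf" using insert.hyps(1) by (intro fin_supp_linf) (rule finite_subset)
      have "f = (\<lambda>x. g x + f a * evec a x)" by (auto simp: g_def evec_def fun_eq_iff)
      hence "\<psi> (Mop f) = \<psi> (Mop g) + f a * \<psi> (Mop (evec a))"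
        using Mlin[OF gl evec_linf, of "f a" a] by simp
      moreover have "\<psi> (Mop g) = 0" using insert.IH gS by blast
      moreover have "\<psi> (Mop (evec a)) = 0" using sg Mop_evec_compact[of a] by (simp add: bop_singular_def)
      ultimately show "\<psi> (Mop f) = 0" by simp
    qed
  qed
  fix f :: "'a \<Rightarrow> complex" assume "finite {x. f x \<noteq> 0}"
  thus "\<psi> (Mop f) = 0" using main by blast
qed

lemma phi_regular: assumes reg: "bop_regular \<psi>" shows "linf_regular (\<lambda>f. \<psi> (Mop f))"
  unfolding linf_regular_def
proof (intro allI impI)
  fix P :: "nat \<Rightarrow> 'a \<Rightarrow> complex" and q
  assume a: "(\<forall>n. linf_proj (P n) \<and> \<psi> (Mop (P n)) = 0) \<and> linf_proj_sup P q"
  have P: "\<forall>n. linf_proj (P n)" using a by blast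
  have sup: "linf_proj_sup P q" using a by blast
  have q: "linf_proj q" using sup by (simp add: linf_proj_sup_def)
  have ql: "q \<in> linf" using q by (simp add: linf_proj_def)
  have Pl: "P n \<in> linf" for n using P by (simp add: linf_proj_def)
  have qP: "(\<lambda>x. q x * P n x) = P n" for n using sup by (simp add: linf_proj_sup_def)
  have bsup: "bop_proj_sup (\<lambda>n. Mop (P n)) (Mop q)"
    unfolding bop_proj_sup_def
  proof (intro conjI allI impI)
    show "bop_proj (Mop q)" by (rule Mop_proj[OF q])
    show "Mop q \<circ> Mop (P n) = Mop (P n)" for n
    proof
      fix g show "(Mop q \<circ> Mop (P n)) g = Mop (P n) g"
      proof (cases "g \<in> ell2")
        case True
        have "Mop (P n) g \<in> ell2" by (rule Mop_in[OF Pl True])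
        moreover have "q x * (P n x * g x) = P n x * g x" for x
          using fun_cong[OF qP[of n], of x] by (metis mult.assoc)
        ultimately show ?thesis using True by (simp add: Mop_def fun_eq_iff)
      next
        case False thus ?thesis by (simp add: Mop_def)
      qed
    qed
    fix R assume R: "bop_proj R \<and> (\<forall>n. R \<circ> Mop (P n) = Mop (P n))"
    have Rp: "bop_proj R" using R by blast
    have Rb: "R \<in> bop" by (rule proj_bop[OF Rp])
    show "R \<circ> Mop q = Mop q"
    proof
      fix g show "(R \<circ> Mop q) g = Mop q g"
      proof (cases "g \<in> ell2")
        case False
        thus ?thesis using bop_zero[OF Rb] by (simp add: Mop_def)
      next
        case True
        define u where "u = Mop q g"
        have u: "u \<in> ell2" unfolding u_def by (rule Mop_in[OF ql True])
        have Ru: "R u \<in> ell2" by (rule bop_ell2[OF Rb u])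
        have A: "R (evec x) = evec x" if qx: "q x \<noteq> 0" for x
        proof -
          obtain n where n: "P n x = 1" using linf_sup_sub[OF P sup qx] by blast
          have "Mop (P n) (evec x) = (\<lambda>y. P n y * evec x y)" using evec_ell2[of x] by (simp add: Mop_def)
          also have "\<dots> = evec x" by (rule ext) (simp add: evec_def n)
          finally have Me: "Mop (P n) (evec x) = evec x" .
          have "R (Mop (P n) (evec x)) = Mop (P n) (evec x)" using R by (metis comp_apply)
          thus ?thesis using Me by simp
        qed
        have B: "R u x = u x" if "q x \<noteq> 0" for x
        proof -
          have "R u x = ell2_inner (evec x) (R u)" by (simp add: inner_evec_left)
          also have "\<dots> = ell2_inner (R (evec x)) u" by (simp add: proj_adj[OF Rp evec_ell2 u])
          also have "\<dots> = u x" by (simp add: A[OF that] inner_evec_left)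
          finally show ?thesis .
        qed
        have C: "u x = 0" if "q x = 0" for x using True that by (simp add: u_def Mop_def)
        have D: "ell2_inner (R u) (R u) = ell2_inner u u"
        proof -
          have "ell2_inner (R u) (R u) = ell2_inner u (R (R u))" by (rule proj_adj[OF Rp u Ru])
          also have "\<dots> = ell2_inner u (R u)" by (simp add: proj_idem[OF Rp])
          also have "\<dots> = ell2_inner u u" unfolding ell2_inner_def
          proof (rule infsum_cong)
            fix x show "cnj (u x) * R u x = cnj (u x) * u x"
              by (cases "q x = 0") (auto simp: B C)
          qed
          finally show ?thesis .
        qed
        have "(ell2_norm (R u))\<^sup>2 = (ell2_norm u)\<^sup>2"
          using D unfolding inner_self[OF u] inner_self[OF Ru] by (simp only: of_real_eq_iff)
        hence E: "(\<Sum>\<^sub>\<infinity>x. (norm (R u x))\<^sup>2) = (\<Sum>\<^sub>\<infinity>x. (norm (u x))\<^sup>2)"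
          by (simp only: ell2_norm_sq)
        have F: "(norm (R u x))\<^sup>2 = (norm (u x))\<^sup>2" for x
        proof (rule eq_sum_le[OF _ _ _ _ E])
          show "(\<lambda>x. (norm (R u x))\<^sup>2) summable_on UNIV" using Ru by (simp add: ell2_def)
          show "(\<lambda>x. (norm (u x))\<^sup>2) summable_on UNIV" using u by (simp add: ell2_def)
          show "0 \<le> (norm (u y))\<^sup>2" for y by simp
          show "(norm (u y))\<^sup>2 \<le> (norm (R u y))\<^sup>2" for y
            by (cases "q y = 0") (auto simp: B C)
        qed
        have "R u x = u x" for x
        proof (cases "q x = 0")
          case True
          thus ?thesis using F[of x] C[OF True] by simp
        next
          case False thus ?thesis by (rule B)
        qed
        thus ?thesis by (simp add: u_def fun_eq_iff)
      qed
    qed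
  qed
  have "\<forall>n. bop_proj (Mop (P n)) \<and> \<psi> (Mop (P n)) = 0" using a by (simp add: Mop_proj)
  moreover note reg[unfolded bop_regular_def, rule_format, of "\<lambda>n. Mop (P n)" "Mop q"]
  ultimately show "\<psi> (Mop q) = 0" using bsup by blast
qed

end

lemma iii_to_ii:
  fixes \<psi> :: "(('a \<Rightarrow> complex) \<Rightarrow> ('a \<Rightarrow> complex)) \<Rightarrow> complex"
  assumes "bop_state \<psi>" "bop_regular \<psi>" "bop_singular \<psi>"
  shows "\<exists>\<phi> :: ('a \<Rightarrow> complex) \<Rightarrow> complex. linf_state \<phi> \<and> linf_regular \<phi> \<and> linf_singular \<phi>"
proof -
  interpret bstate \<psi> by (rule bstate.intro[OF assms(1)])
  show ?thesis using phi_state phi_regular[OF assms(2)] phi_singular[OF assms(3)] by blast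
qed

theorem theorem8p2:
  assumes "uncountable (UNIV :: 'a set)"
  shows "((\<exists>\<mu> :: 'a set \<Rightarrow> real. fa_prob_measure \<mu> \<and> regular_measure \<mu> \<and> (\<forall>x. \<mu> {x} = 0))
            \<longleftrightarrow> (\<exists>\<phi> :: ('a \<Rightarrow> complex) \<Rightarrow> complex. linf_state \<phi> \<and> linf_regular \<phi> \<and> linf_singular \<phi>))
       \<and> ((\<exists>\<phi> :: ('a \<Rightarrow> complex) \<Rightarrow> complex. linf_state \<phi> \<and> linf_regular \<phi> \<and> linf_singular \<phi>)
            \<longleftrightarrow> (\<exists>\<psi> :: (('a \<Rightarrow> complex) \<Rightarrow> ('a \<Rightarrow> complex)) \<Rightarrow> complex.
                   bop_state \<psi> \<and> bop_regular \<psi> \<and> bop_singular \<psi>))"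
proof (intro conjI iffI)
  assume "\<exists>\<mu> :: 'a set \<Rightarrow> real. fa_prob_measure \<mu> \<and> regular_measure \<mu> \<and> (\<forall>x. \<mu> {x} = 0)"
  then obtain \<mu> :: "'a set \<Rightarrow> real" where m: "fa_prob_measure \<mu>" "regular_measure \<mu>" "\<forall>x. \<mu> {x} = 0" by blast
  show "\<exists>\<phi> :: ('a \<Rightarrow> complex) \<Rightarrow> complex. linf_state \<phi> \<and> linf_regular \<phi> \<and> linf_singular \<phi>"
    by (rule i_to_ii[OF m])
next
  assume "\<exists>\<phi> :: ('a \<Rightarrow> complex) \<Rightarrow> complex. linf_state \<phi> \<and> linf_regular \<phi> \<and> linf_singular \<phi>"
  then obtain \<phi> :: "('a \<Rightarrow> complex) \<Rightarrow> complex" where p: "linf_state \<phi>" "linf_regular \<phi>" "linf_singular \<phi>" by blast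
  show "\<exists>\<mu> :: 'a set \<Rightarrow> real. fa_prob_measure \<mu> \<and> regular_measure \<mu> \<and> (\<forall>x. \<mu> {x} = 0)"
    by (rule ii_to_i[OF p])
next
  assume "\<exists>\<phi> :: ('a \<Rightarrow> complex) \<Rightarrow> complex. linf_state \<phi> \<and> linf_regular \<phi> \<and> linf_singular \<phi>"
  then obtain \<phi> :: "('a \<Rightarrow> complex) \<Rightarrow> complex" where p: "linf_state \<phi>" "linf_regular \<phi>" "linf_singular \<phi>" by blast
  show "\<exists>\<psi> :: (('a \<Rightarrow> complex) \<Rightarrow> ('a \<Rightarrow> complex)) \<Rightarrow> complex. bop_state \<psi> \<and> bop_regular \<psi> \<and> bop_singular \<psi>"
    by (rule ii_to_iii[OF p])
next
  assume "\<exists>\<psi> :: (('a \<Rightarrow> complex) \<Rightarrow> ('a \<Rightarrow> complex)) \<Rightarrow> complex. bop_state \<psi> \<and> bop_regular \<psi> \<and> bop_singular \<psi>"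
  then obtain \<psi> :: "(('a \<Rightarrow> complex) \<Rightarrow> ('a \<Rightarrow> complex)) \<Rightarrow> complex" where p: "bop_state \<psi>" "bop_regular \<psi>" "bop_singular \<psi>" by blast
  show "\<exists>\<phi> :: ('a \<Rightarrow> complex) \<Rightarrow> complex. linf_state \<phi> \<and> linf_regular \<phi> \<and> linf_singular \<phi>"
    by (rule iii_to_ii[OF p])
qed

end
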